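(* Let $V$ be a real vector space of dimension $m\ge1$, let $\Gamma$ be a finitely generated free abelian group which is a dense subgroup of $V$ acting by translations, and let $\mathcal C$ be a countable collection of affine hyperplanes of $V$, invariant under translation by $\Gamma$, consisting of finitely many $\Gamma$-orbits, and whose normal vectors span $V$. Then there is a group homomorphism $\xi_*:H_0(\Gamma;CV_{\mathcal C})\to\bigoplus_{\mathcal J}\mathbb Z/2$ such that for every $v\in\mathcal P$ there exist a singular flag $\mathcal F=(\theta_0,\dots,\theta_{m-1})$ with $\theta_0=\{v\}$ and an element $e_v\in H_0(\Gamma;CV_{\mathcal C})$ such that $\xi_*(e_v)$ has value $1$ at the coordinate $[\mathcal F]$.
   Context: $\mathcal P$ is the set of points of $V$ obtained as $0$-dimensional intersections of $m$ elements of $\mathcal C$. For $0\le k\le m-1$, $\mathcal C^{(k)}$ is the set of $k$-dimensional affine subspaces formed as intersections of elements of $\mathcal C$. A singular flag is a sequence $(\theta_0,\dots,\theta_{m-1})$ with $\theta_j\in\mathcal C^{(j)}$ and $\theta_j\subset\theta_{j+1}$; $\mathcal J_o$ is the set of singular flags, on which $\Gamma$ acts by translation, $\mathcal J=\mathcal J_o/\Gamma$ the set of orbits, and $[\mathcal F]$ the orbit of $\mathcal F$. A $\mathcal C$-tope is a compact polytope which is the closure of its interior and whose $(m-1)$-dimensional faces lie in elements of $\mathcal C$. With $V'=V\setminus\bigcup\mathcal C$, $CV_{\mathcal C}$ is the ring of integer-valued functions on $V'$ generated by indicators of $P\cap V'$, $P$ a $\mathcal C$-tope, with $\Gamma$ acting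 by translation; $H_0(\Gamma;\cdot)$ denotes group homology (coinvariants). *)

theory Defs
  imports "HOL-Analysis.Analysis" "HOL-Algebra.Algebra"
begin

definition affine_hyperplane :: "'v::euclidean_space set \<Rightarrow> bool" where
  "affine_hyperplane H \<longleftrightarrow> (\<exists>a b. a \<noteq> 0 \<and> H = {x. a \<bullet> x = b})"

definition normals :: "'v::euclidean_space set set \<Rightarrow> 'v set" where
  "normals \<C> = {a. a \<noteq> 0 \<and> (\<exists>b. {x. a \<bullet> x = b} \<in> \<C>)}"

definition int_span :: "'v::real_vector set \<Rightarrow> 'v set" where
  "int_span B = {\<Sum>b\<in>B. of_int (c b) *\<^sub>R b | c. True}"

definition int_independent :: "'v::real_vector set \<Rightarrow> bool" where
  "int_independent B \<longleftrightarrow>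
     (\<forall>c. (\<Sum>b\<in>B. of_int (c b) *\<^sub>R b) = 0 \<longrightarrow> (\<forall>b\<in>B. c b = 0))"

definition fg_free_subgroup :: "'v::real_vector set \<Rightarrow> bool" where
  "fg_free_subgroup \<Gamma> \<longleftrightarrow> (\<exists>B. finite B \<and> int_independent B \<and> \<Gamma> = int_span B)"

definition points_P :: "'v::euclidean_space set set \<Rightarrow> 'v set" where
  "points_P \<C> = {v. \<exists>F. F \<subseteq> \<C> \<and> finite F \<and> card F = DIM('v) \<and> \<Inter>F = {v}}"

definition C_k :: "'v::euclidean_space set set \<Rightarrow> nat \<Rightarrow> 'v set set" where
  "C_k \<C> k = {\<theta>. \<exists>F. F \<subseteq> \<C> \<and> F \<noteq> {} \<and> \<theta> = \<Inter>F \<and> \<theta> \<noteq> {} \<and> aff_dim \<theta> = int k}"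

definition singular_flags :: "'v::euclidean_space set set \<Rightarrow> 'v set list set" where
  "singular_flags \<C> = {fl. length fl = DIM('v)
      \<and> (\<forall>j<DIM('v). fl ! j \<in> C_k \<C> j)
      \<and> (\<forall>j. Suc j < DIM('v) \<longrightarrow> fl ! j \<subseteq> fl ! Suc j)}"

definition translate_flag :: "'v::euclidean_space \<Rightarrow> 'v set list \<Rightarrow> 'v set list" where
  "translate_flag g fl = map (\<lambda>\<theta>. (+) g ` \<theta>) fl"

definition flag_orbit :: "'v::euclidean_space set \<Rightarrow> 'v set list \<Rightarrow> 'v set list set" where
  "flag_orbit \<Gamma> fl = {translate_flag g fl | g. g \<in> \<Gamma>}"

definition flag_orbits :: "'v::euclidean_space set \<Rightarrow> 'v set set \<Rightarrow> 'v set list set set" where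
  "flag_orbits \<Gamma> \<C> = flag_orbit \<Gamma> ` singular_flags \<C>"

definition C_tope :: "'v::euclidean_space set set \<Rightarrow> 'v set \<Rightarrow> bool" where
  "C_tope \<C> P \<longleftrightarrow> polytope P \<and> compact P \<and> closure (interior P) = P
      \<and> (\<forall>F. F facet_of P \<longrightarrow> (\<exists>H\<in>\<C>. F \<subseteq> H))"

definition V' :: "'v::euclidean_space set set \<Rightarrow> 'v set" where
  "V' \<C> = UNIV - \<Union>\<C>"

text \<open>CV_\<C>: integer valued functions on V' (represented as functions on V vanishing
  off V') forming the ring generated by the indicators of P \<inter> V', P a \<C>-tope.\<close>
inductive_set CV :: "'v::euclidean_space set set \<Rightarrow> ('v \<Rightarrow> int) set" for \<C> where
  gen: "C_tope \<C> P \<Longrightarrow> indicator (P \<inter> V' \<C>) \<in> CV \<C>"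
| zero: "(\<lambda>x. 0) \<in> CV \<C>"
| diff: "f \<in> CV \<C> \<Longrightarrow> g \<in> CV \<C> \<Longrightarrow> (\<lambda>x. f x - g x) \<in> CV \<C>"
| mult: "f \<in> CV \<C> \<Longrightarrow> g \<in> CV \<C> \<Longrightarrow> (\<lambda>x. f x * g x) \<in> CV \<C>"

definition CV_group :: "'v::euclidean_space set set \<Rightarrow> ('v \<Rightarrow> int) monoid" where
  "CV_group \<C> = \<lparr>carrier = CV \<C>, monoid.mult = (\<lambda>f g x. f x + g x), one = (\<lambda>x. 0)\<rparr>"

definition translate_fun :: "'v::euclidean_space \<Rightarrow> ('v \<Rightarrow> int) \<Rightarrow> ('v \<Rightarrow> int)" where
  "translate_fun g f = (\<lambda>x. f (x - g))"

text \<open>H_0(\<Gamma>; CV_\<C>): coinvariants, CV_\<C> modulo the subgroup generated by f - g\<cdot>f.\<close>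
definition coinv_subgroup :: "'v::euclidean_space set \<Rightarrow> 'v set set \<Rightarrow> ('v \<Rightarrow> int) set" where
  "coinv_subgroup \<Gamma> \<C> = generate (CV_group \<C>)
      {(\<lambda>x. f x - translate_fun g f x) | f g. f \<in> CV \<C> \<and> g \<in> \<Gamma>}"

definition H0 :: "'v::euclidean_space set \<Rightarrow> 'v set set \<Rightarrow> ('v \<Rightarrow> int) set monoid" where
  "H0 \<Gamma> \<C> = CV_group \<C> Mod coinv_subgroup \<Gamma> \<C>"

definition Z2_sum :: "'v::euclidean_space set \<Rightarrow> 'v set set \<Rightarrow> ('v set list set \<Rightarrow> int) monoid" where
  "Z2_sum \<Gamma> \<C> = sum_group (flag_orbits \<Gamma> \<C>) (\<lambda>_. integer_mod_group 2)"

end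

theory Submission
  imports Defs
begin

fun Pol :: "'v::real_vector set \<Rightarrow> nat \<Rightarrow> ('v \<Rightarrow> real) set" where
  "Pol G 0 = {ch. \<forall>x\<in>G. ch x = 0}"
| "Pol G (Suc k) = {ch. \<forall>h\<in>G. (\<lambda>x. ch (x + h) - ch x) \<in> Pol G k}"

definition addclosed :: "'v::real_vector set \<Rightarrow> bool" where
  "addclosed G \<longleftrightarrow> (\<forall>x\<in>G. \<forall>y\<in>G. x + y \<in> G)"

lemma Pol_cong:
  assumes "addclosed G" "ch \<in> Pol G k" "\<And>x. x \<in> G \<Longrightarrow> ch x = ps x"
  shows "ps \<in> Pol G k"
  using assms(2,3)
proof (induction k arbitrary: ch ps)
  case 0
  then show ?case by auto
next
  case (Suc k)
  show ?case
  proof (simp, intro ballI)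
    fix h assume h: "h \<in> G"
    have "(\<lambda>x. ch (x + h) - ch x) \<in> Pol G k" using Suc.prems h by auto
    then show "(\<lambda>x. ps (x + h) - ps x) \<in> Pol G k"
      by (rule Suc.IH) (use Suc.prems h assms(1) in \<open>auto simp: addclosed_def\<close>)
  qed
qed

lemma Pol_mono:
  assumes "addclosed G" "ch \<in> Pol G k"
  shows "ch \<in> Pol G (Suc k)"
  using assms(2)
proof (induction k arbitrary: ch)
  case 0
  then show ?case using assms(1) by (auto simp: addclosed_def)
next
  case (Suc k)
  then show ?case by auto
qed

lemma Pol_mono_le:
  assumes "addclosed G" "ch \<in> Pol G k" "k \<le> k'"
  shows "ch \<in> Pol G k'"
  using assms(3,2)
proof (induction k' rule: dec_induct)
  case base
  then show ?case by simp
next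
  case (step n)
  then show ?case using Pol_mono[OF assms(1)] by blast
qed

lemma Pol_add:
  assumes "ch \<in> Pol G k" "ps \<in> Pol G k"
  shows "(\<lambda>x. ch x + ps x) \<in> Pol G k"
  using assms
proof (induction k arbitrary: ch ps)
  case 0
  then show ?case by auto
next
  case (Suc k)
  show ?case
  proof (simp, intro ballI)
    fix h assume h: "h \<in> G"
    have "(\<lambda>x. (ch (x + h) - ch x) + (ps (x + h) - ps x)) \<in> Pol G k"
      using Suc h by auto
    moreover have "(\<lambda>x. (ch (x + h) - ch x) + (ps (x + h) - ps x)) =
        (\<lambda>x. ch (x + h) + ps (x + h) - (ch x + ps x))" by (auto simp: fun_eq_iff)
    ultimately show "(\<lambda>x. ch (x + h) + ps (x + h) - (ch x + ps x)) \<in> Pol G k" by simp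
  qed
qed

lemma Pol_scale:
  assumes "ch \<in> Pol G k"
  shows "(\<lambda>x. c * ch x) \<in> Pol G k"
  using assms
proof (induction k arbitrary: ch)
  case 0
  then show ?case by auto
next
  case (Suc k)
  show ?case
  proof (simp, intro ballI)
    fix h assume h: "h \<in> G"
    have "(\<lambda>x. c * (ch (x + h) - ch x)) \<in> Pol G k"
      using Suc h by auto
    moreover have "(\<lambda>x. c * (ch (x + h) - ch x)) = (\<lambda>x. c * ch (x + h) - c * ch x)"
      by (auto simp: fun_eq_iff algebra_simps)
    ultimately show "(\<lambda>x. c * ch (x + h) - c * ch x) \<in> Pol G k" by simp
  qed
qed

lemma Pol_shift:
  assumes "addclosed G" "ch \<in> Pol G k" "h \<in> G"
  shows "(\<lambda>x. ch (x + h)) \<in> Pol G k"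
  using assms(2)
proof (induction k arbitrary: ch)
  case 0
  then show ?case using assms by (auto simp: addclosed_def)
next
  case (Suc k)
  show ?case
  proof (simp, intro ballI)
    fix h' assume h': "h' \<in> G"
    have "(\<lambda>x. ch (x + h') - ch x) \<in> Pol G k" using Suc.prems h' by auto
    then have "(\<lambda>x. (\<lambda>x. ch (x + h') - ch x) (x + h)) \<in> Pol G k" by (rule Suc.IH)
    moreover have "(\<lambda>x. (\<lambda>x. ch (x + h') - ch x) (x + h)) = (\<lambda>x. ch (x + h' + h) - ch (x + h))"
      by (auto simp: fun_eq_iff algebra_simps)
    ultimately show "(\<lambda>x. ch (x + h' + h) - ch (x + h)) \<in> Pol G k" by simp
  qed
qed

lemma Pol_const: "(\<lambda>x. c) \<in> Pol G (Suc 0)"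
  by simp

lemma Pol_mult_aux:
  assumes "addclosed G"
  shows "a + b = n \<Longrightarrow> ch \<in> Pol G (Suc a) \<Longrightarrow> ps \<in> Pol G (Suc b) \<Longrightarrow>
    (\<lambda>x. ch x * ps x) \<in> Pol G (Suc n)"
proof (induction n arbitrary: a b ch ps rule: less_induct)
  case (less n)
  show ?case
  proof (simp, intro ballI)
    fix h assume h: "h \<in> G"
    define d1 where "d1 = (\<lambda>x. ch (x + h) - ch x)"
    define d2 where "d2 = (\<lambda>x. ps (x + h) - ps x)"
    have d1: "d1 \<in> Pol G a" using less.prems h by (auto simp: d1_def)
    have d2: "d2 \<in> Pol G b" using less.prems h by (auto simp: d2_def)
    have sh: "(\<lambda>x. ps (x + h)) \<in> Pol G (Suc b)" using Pol_shift[OF assms] less.prems h by blast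
    have t1: "(\<lambda>x. d1 x * ps (x + h)) \<in> Pol G n"
    proof (cases a)
      case 0
      then have "(\<lambda>x. d1 x * ps (x + h)) \<in> Pol G 0" using d1 by auto
      then show ?thesis using Pol_mono_le[OF assms] by blast
    next
      case (Suc a')
      then have "(\<lambda>x. d1 x * ps (x + h)) \<in> Pol G (Suc (a' + b))"
        using less.IH[of "a' + b" a' b d1 "\<lambda>x. ps (x + h)"] less.prems d1 sh by auto
      moreover have "Suc (a' + b) = n" using less.prems(1) Suc by simp
      ultimately show ?thesis by (simp only:)
    qed
    have t2: "(\<lambda>x. ch x * d2 x) \<in> Pol G n"
    proof (cases b)
      case 0
      then have "(\<lambda>x. ch x * d2 x) \<in> Pol G 0" using d2 by auto
      then show ?thesis using Pol_mono_le[OF assms] by blast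
    next
      case (Suc b')
      then have "(\<lambda>x. ch x * d2 x) \<in> Pol G (Suc (a + b'))"
        using less.IH[of "a + b'" a b' ch d2] less.prems d2 by auto
      moreover have "Suc (a + b') = n" using less.prems(1) Suc by simp
      ultimately show ?thesis by (simp only:)
    qed
    have "(\<lambda>x. d1 x * ps (x + h) + ch x * d2 x) \<in> Pol G n" using Pol_add[OF t1 t2] .
    moreover have "(\<lambda>x. d1 x * ps (x + h) + ch x * d2 x) = (\<lambda>x. ch (x + h) * ps (x + h) - ch x * ps x)"
      by (auto simp: fun_eq_iff d1_def d2_def algebra_simps)
    ultimately show "(\<lambda>x. ch (x + h) * ps (x + h) - ch x * ps x) \<in> Pol G n" by simp
  qed
qed

lemma Pol_mult:
  assumes "addclosed G" "ch \<in> Pol G (Suc a)" "ps \<in> Pol G (Suc b)"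
  shows "(\<lambda>x. ch x * ps x) \<in> Pol G (Suc (a + b))"
  using Pol_mult_aux[OF assms(1) refl assms(2,3)] .

lemma Pol_prod:
  assumes "addclosed G" "finite I" "\<And>i. i \<in> I \<Longrightarrow> f i \<in> Pol G (Suc (d i))"
  shows "(\<lambda>x. \<Prod>i\<in>I. f i x) \<in> Pol G (Suc (\<Sum>i\<in>I. d i))"
  using assms(2,3)
proof (induction I rule: finite_induct)
  case empty
  then show ?case by simp
next
  case (insert i I)
  have "(\<lambda>x. f i x * (\<Prod>i\<in>I. f i x)) \<in> Pol G (Suc (d i + (\<Sum>i\<in>I. d i)))"
    using Pol_mult[OF assms(1), of "f i" "d i" "\<lambda>x. \<Prod>i\<in>I. f i x"] insert by auto
  then show ?case using insert by simp
qed

definition cf :: "'v::real_vector set \<Rightarrow> 'v \<Rightarrow> 'v \<Rightarrow> int" where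
  "cf B x = (SOME c. x = (\<Sum>b\<in>B. of_int (c b) *\<^sub>R b))"

lemma cf_spec: assumes "x \<in> int_span B" shows "x = (\<Sum>b\<in>B. of_int (cf B x b) *\<^sub>R b)"
proof -
  obtain c where "x = (\<Sum>b\<in>B. of_int (c b) *\<^sub>R b)" using assms unfolding int_span_def by auto
  then show ?thesis unfolding cf_def by (rule someI[where P="\<lambda>c. x = (\<Sum>b\<in>B. of_int (c b) *\<^sub>R b)"])
qed

lemma cf_unique:
  assumes "int_independent B" "x = (\<Sum>b\<in>B. of_int (c b) *\<^sub>R b)" "b \<in> B"
  shows "cf B x b = c b"
proof -
  have x: "x \<in> int_span B" using assms(2) unfolding int_span_def by auto
  have "(\<Sum>b\<in>B. of_int (cf B x b - c b) *\<^sub>R b) = (\<Sum>b\<in>B. of_int (cf B x b) *\<^sub>R b) - (\<Sum>b\<in>B. of_int (c b) *\<^sub>R b)"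
    by (simp add: sum_subtractf scaleR_diff_left)
  also have "\<dots> = 0" using cf_spec[OF x] assms(2) by simp
  finally have "(\<Sum>b\<in>B. of_int (cf B x b - c b) *\<^sub>R b) = 0" .
  from assms(1)[unfolded int_independent_def, rule_format, OF this assms(3)] show ?thesis by simp
qed

lemma int_span_add: assumes "x \<in> int_span B" "y \<in> int_span B" shows "x + y \<in> int_span B"
proof -
  obtain c c' where "x = (\<Sum>b\<in>B. of_int (c b) *\<^sub>R b)" "y = (\<Sum>b\<in>B. of_int (c' b) *\<^sub>R b)"
    using assms unfolding int_span_def by auto
  then have "x + y = (\<Sum>b\<in>B. of_int (c b + c' b) *\<^sub>R b)" by (simp add: sum.distrib scaleR_add_left)
  then show ?thesis unfolding int_span_def mem_Collect_eq by (intro exI[of _ "\<lambda>b. c b + c' b"]) simp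
qed

lemma addclosed_int_span: "addclosed (int_span B)"
  unfolding addclosed_def using int_span_add by blast

lemma cf_add:
  assumes "int_independent B" "x \<in> int_span B" "y \<in> int_span B" "b \<in> B"
  shows "cf B (x + y) b = cf B x b + cf B y b"
proof -
  have "x + y = (\<Sum>b\<in>B. of_int (cf B x b + cf B y b) *\<^sub>R b)"
    using cf_spec[OF assms(2)] cf_spec[OF assms(3)] by (simp add: sum.distrib scaleR_add_left)
  from cf_unique[OF assms(1) this assms(4)] show ?thesis .
qed

lemma cf_inj:
  assumes "x \<in> int_span B" "y \<in> int_span B" "\<And>b. b \<in> B \<Longrightarrow> cf B x b = cf B y b"
  shows "x = y"
  using cf_spec[OF assms(1)] cf_spec[OF assms(2)] assms(3) by (metis (no_types, lifting) sum.cong)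

lemma Pol_affine:
  assumes "int_independent B" "b \<in> B"
  shows "(\<lambda>x. real_of_int (cf B x b) - r) \<in> Pol (int_span B) (Suc (Suc 0))"
proof -
  have "\<forall>h\<in>int_span B. (\<lambda>x. real_of_int (cf B (x + h) b) - r - (real_of_int (cf B x b) - r)) \<in> Pol (int_span B) (Suc 0)"
  proof
    fix h assume h: "h \<in> int_span B"
    show "(\<lambda>x. real_of_int (cf B (x + h) b) - r - (real_of_int (cf B x b) - r)) \<in> Pol (int_span B) (Suc 0)"
      by (rule Pol_cong[OF addclosed_int_span Pol_const[of "real_of_int (cf B h b)"]])
         (use cf_add[OF assms(1) _ h assms(2)] in auto)
  qed
  then show ?thesis by (simp only: Pol.simps(2) mem_Collect_eq)
qed

lemma gchoose_int_Ints: "(real_of_int n gchoose k) \<in> \<int>"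
proof (cases "n \<ge> 0")
  case True
  then have "real_of_int n = of_nat (nat n)" by simp
  then show ?thesis by (metis Ints_of_nat binomial_gbinomial)
next
  case False
  have "real_of_int n gchoose k = (-1)^k * (of_nat k - real_of_int n - 1 gchoose k)"
    by (rule gbinomial_negated_upper)
  also have "of_nat k - real_of_int n - 1 = of_nat (nat (int k - n - 1))" using False by simp
  finally show ?thesis by (metis Ints_mult Ints_of_nat Ints_power Ints_minus Ints_1 binomial_gbinomial)
qed

lemma Pol_gchoose:
  assumes "int_independent B" "b \<in> B"
  shows "(\<lambda>x. (real_of_int (cf B x b) - r) gchoose k) \<in> Pol (int_span B) (Suc k)"
proof -
  have "(\<lambda>x. \<Prod>i\<in>{0..<k}. real_of_int (cf B x b) - (r + of_nat i)) \<in> Pol (int_span B) (Suc (\<Sum>i\<in>{0..<k}. Suc 0))"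
    by (rule Pol_prod[OF addclosed_int_span, where I="{0..<k}" and f="\<lambda>i x. real_of_int (cf B x b) - (r + of_nat i)" and d="\<lambda>i. Suc 0"])
       (simp, rule Pol_affine[OF assms])
  moreover have "(\<Sum>i\<in>{0..<k}. Suc 0) = k" by simp
  ultimately have "(\<lambda>x. \<Prod>i\<in>{0..<k}. real_of_int (cf B x b) - (r + of_nat i)) \<in> Pol (int_span B) (Suc k)"
    by (simp only:)
  then have "(\<lambda>x. inverse (fact k) * (\<Prod>i\<in>{0..<k}. real_of_int (cf B x b) - (r + of_nat i))) \<in> Pol (int_span B) (Suc k)"
    by (rule Pol_scale)
  moreover have "(\<lambda>x. (real_of_int (cf B x b) - r) gchoose k) = (\<lambda>x. inverse (fact k) * (\<Prod>i\<in>{0..<k}. real_of_int (cf B x b) - (r + of_nat i)))"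
  proof
    fix x
    have "(real_of_int (cf B x b) - r) gchoose k = (\<Prod>i=0..<k. (real_of_int (cf B x b) - r) - of_nat i) / fact k"
      by (simp add: gbinomial_prod_rev)
    also have "\<dots> = inverse (fact k) * (\<Prod>i\<in>{0..<k}. real_of_int (cf B x b) - (r + of_nat i))"
      by (simp add: divide_inverse mult.commute diff_diff_eq)
    finally show "(real_of_int (cf B x b) - r) gchoose k = inverse (fact k) * (\<Prod>i\<in>{0..<k}. real_of_int (cf B x b) - (r + of_nat i))" .
  qed
  ultimately show ?thesis by simp
qed

lemma detect:
  assumes fin: "finite B" and ind: "int_independent B" and D: "D \<subseteq> int_span B" "finite D" "D \<noteq> {}"
  shows "\<exists>k ch. ch \<in> Pol (int_span B) k \<and> (\<forall>x\<in>int_span B. ch x \<in> \<int>) \<and> (\<Sum>x\<in>D. ch x) = 1"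
proof -
  define q where "q b = - (\<Sum>x\<in>D. \<bar>cf B x b\<bar>)" for b
  define n where "n x b = cf B x b - q b" for x b
  have npos: "n x b \<ge> 0" if "x \<in> D" for x b
  proof -
    have "\<bar>cf B x b\<bar> \<le> (\<Sum>x\<in>D. \<bar>cf B x b\<bar>)"
      using member_le_sum[of x D "\<lambda>x. \<bar>cf B x b\<bar>"] that D by auto
    then show ?thesis unfolding n_def q_def by linarith
  qed
  define S where "S x = (\<Sum>b\<in>B. n x b)" for x
  obtain xs where xs: "xs \<in> D" "\<And>x. x \<in> D \<Longrightarrow> S x \<le> S xs"
  proof -
    have "Max (S ` D) \<in> S ` D" using D by (intro Max_in) auto
    then obtain xs where "xs \<in> D" "S xs = Max (S ` D)" by auto
    then show ?thesis using that D by auto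
  qed
  define \<alpha> where "\<alpha> b = nat (n xs b)" for b
  define ch where "ch x = (\<Prod>b\<in>B. (real_of_int (cf B x b) - real_of_int (q b)) gchoose \<alpha> b)" for x
  have pol: "ch \<in> Pol (int_span B) (Suc (\<Sum>b\<in>B. \<alpha> b))"
    unfolding ch_def
    by (rule Pol_prod[OF addclosed_int_span fin]) (rule Pol_gchoose[OF ind])
  have ints: "ch x \<in> \<int>" for x
  proof -
    have "(real_of_int (cf B x b) - real_of_int (q b)) gchoose \<alpha> b \<in> \<int>" for b
      using gchoose_int_Ints[of "cf B x b - q b" "\<alpha> b"] by simp
    then show ?thesis unfolding ch_def by (intro Ints_prod) auto
  qed
  have val: "ch x = (\<Prod>b\<in>B. of_nat (nat (n x b) choose \<alpha> b))" if "x \<in> D" for x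
  proof -
    have "(real_of_int (cf B x b) - real_of_int (q b)) = of_nat (nat (n x b))" for b
      using npos[OF that, of b] unfolding n_def by simp
    then show ?thesis unfolding ch_def by (simp add: binomial_gbinomial)
  qed
  have one: "ch xs = 1"
    using val[OF xs(1)] unfolding \<alpha>_def by simp
  have zero: "ch x = 0" if "x \<in> D" "x \<noteq> xs" for x
  proof -
    have "\<exists>b\<in>B. nat (n x b) < \<alpha> b"
    proof (rule ccontr)
      assume nb: "\<not> (\<exists>b\<in>B. nat (n x b) < \<alpha> b)"
      have ge: "n xs b \<le> n x b" if "b \<in> B" for b
      proof -
        have "nat (n xs b) \<le> nat (n x b)" using nb that unfolding \<alpha>_def by auto
        moreover have "0 \<le> n x b" using npos \<open>x \<in> D\<close> by blast
        ultimately show ?thesis using nat_le_eq_zle[of "n xs b" "n x b"] by linarith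
      qed
      have eq: "n x b = n xs b" if "b \<in> B" for b
      proof (rule ccontr)
        assume "n x b \<noteq> n xs b"
        then have "n xs b < n x b" using ge[OF that] by simp
        then have "S xs < S x" unfolding S_def
          using sum_strict_mono_ex1[OF fin, of "n xs" "n x"] ge that by blast
        then show False using xs(2)[OF \<open>x \<in> D\<close>] by simp
      qed
      have "x = xs"
        by (rule cf_inj) (use D that xs eq in \<open>auto simp: n_def\<close>)
      then show False using that by simp
    qed
    then obtain b where "b \<in> B" "nat (n x b) < \<alpha> b" by blast
    then show ?thesis using val[OF that(1)] fin by (auto intro: prod_zero)
  qed
  have "(\<Sum>x\<in>D. ch x) = ch xs + (\<Sum>x\<in>D - {xs}. ch x)"
    using D xs by (simp add: sum.remove)
  also have "\<dots> = 1" using one zero by simp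
  finally show ?thesis using pol ints by blast
qed

definition oddsum :: "('v \<Rightarrow> real) \<Rightarrow> 'v set \<Rightarrow> bool" where
  "oddsum ch D \<longleftrightarrow> odd (\<Sum>x\<in>D. \<lfloor>ch x\<rfloor>)"

definition goodk :: "'v::real_vector set \<Rightarrow> 'v set set \<Rightarrow> nat \<Rightarrow> ('v \<Rightarrow> real) \<Rightarrow> bool" where
  "goodk G M k ch \<longleftrightarrow> ch \<in> Pol G k \<and> (\<forall>x\<in>G. ch x \<in> \<int>) \<and> (\<exists>D\<in>M. oddsum ch D)"

definition kLeast :: "'v::real_vector set \<Rightarrow> 'v set set \<Rightarrow> nat" where
  "kLeast G M = (LEAST k. \<exists>ch. goodk G M k ch)"

definition chM :: "'v::real_vector set \<Rightarrow> 'v set set \<Rightarrow> 'v \<Rightarrow> real" where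
  "chM G M = (SOME ch. goodk G M (kLeast G M) ch)"

definition valM :: "'v::real_vector set \<Rightarrow> 'v set set \<Rightarrow> 'v set \<Rightarrow> int" where
  "valM G M D = (if \<exists>k ch. goodk G M k ch then (if oddsum (chM G M) D then 1 else 0) else 0)"

lemma valM_range: "valM G M D \<in> {0, 1}"
  unfolding valM_def by auto

lemma chM_good:
  assumes "\<exists>k ch. goodk G M k ch"
  shows "goodk G M (kLeast G M) (chM G M)"
proof -
  have "\<exists>ch. goodk G M (kLeast G M) ch" unfolding kLeast_def using assms by (rule LeastI_ex)
  then show ?thesis unfolding chM_def by (rule someI_ex)
qed

lemma sum_symdiff_int:
  fixes f :: "'a \<Rightarrow> int"
  assumes "finite A" "finite B"
  shows "sum f ((A - B) \<union> (B - A)) = sum f A + sum f B - 2 * sum f (A \<inter> B)"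
proof -
  have "sum f ((A - B) \<union> (B - A)) = sum f (A - B) + sum f (B - A)"
    using assms by (intro sum.union_disjoint) auto
  moreover have "sum f A = sum f (A - B) + sum f (A \<inter> B)"
    using sum.Int_Diff[OF assms(1), of f B] by simp
  moreover have "sum f B = sum f (B - A) + sum f (A \<inter> B)"
    using sum.Int_Diff[OF assms(2), of f A] by (simp add: Int_commute)
  ultimately show ?thesis by simp
qed

lemma valM_add:
  assumes "finite D1" "finite D2"
  shows "valM G M ((D1 - D2) \<union> (D2 - D1)) = (valM G M D1 + valM G M D2) mod 2"
proof -
  have "odd (\<Sum>x\<in>(D1 - D2) \<union> (D2 - D1). \<lfloor>ch x\<rfloor>) \<longleftrightarrow>
        odd (\<Sum>x\<in>D1. \<lfloor>ch x\<rfloor>) \<noteq> odd (\<Sum>x\<in>D2. \<lfloor>ch x\<rfloor>)" for ch :: "_ \<Rightarrow> real"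
    using sum_symdiff_int[OF assms, of "\<lambda>x. \<lfloor>ch x\<rfloor>"] by simp
  then show ?thesis unfolding valM_def oddsum_def by auto
qed

lemma floor_diff_Ints: "a \<in> \<int> \<Longrightarrow> b \<in> \<int> \<Longrightarrow> \<lfloor>a - b\<rfloor> = \<lfloor>a\<rfloor> - \<lfloor>b\<rfloor>"
  by (metis Ints_cases floor_diff_of_int floor_of_int)

lemma valM_shift:
  assumes G: "addclosed G" and M: "\<And>D'. D' \<in> M \<Longrightarrow> D' \<subseteq> G \<and> finite D'"
    and DM: "D \<in> M" and h: "h \<in> G"
  shows "valM G M ((D - (+) h ` D) \<union> ((+) h ` D - D)) = 0"
proof (cases "\<exists>k ch. goodk G M k ch")
  case False
  then show ?thesis unfolding valM_def by auto
next
  case True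
  let ?ch = "chM G M"
  have DG: "D \<subseteq> G" and fin: "finite D" using M[OF DM] by auto
  have good: "goodk G M (kLeast G M) ?ch" using chM_good[OF True] .
  have ints: "\<And>x. x \<in> G \<Longrightarrow> ?ch x \<in> \<int>" using good unfolding goodk_def by auto
  obtain k' where k': "kLeast G M = Suc k'"
  proof (cases "kLeast G M")
    case 0
    then have "\<forall>x\<in>G. ?ch x = 0" using good unfolding goodk_def by simp
    moreover obtain D' where "D' \<in> M" "oddsum ?ch D'" using good unfolding goodk_def by auto
    moreover have "D' \<subseteq> G" using M \<open>D' \<in> M\<close> by auto
    ultimately have False unfolding oddsum_def by (auto simp: subset_eq)
    then show ?thesis by simp
  next
    case (Suc k')
    then show ?thesis using that by simp
  qed
  define d where "d = (\<lambda>x. ?ch (x + h) - ?ch x)"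
  have dpol: "d \<in> Pol G k'" using good k' h unfolding goodk_def d_def by auto
  have dint: "\<forall>x\<in>G. d x \<in> \<int>" using ints h G unfolding d_def addclosed_def by auto
  have "\<not> (\<exists>ch. goodk G M k' ch)"
    using not_less_Least[of k' "\<lambda>k. \<exists>ch. goodk G M k ch"] k' unfolding kLeast_def by simp
  then have "\<not> oddsum d D" using dpol dint DM unfolding goodk_def by blast
  then have evd: "even (\<Sum>x\<in>D. \<lfloor>d x\<rfloor>)" unfolding oddsum_def by simp
  have "(\<Sum>x\<in>(+) h ` D. \<lfloor>?ch x\<rfloor>) = (\<Sum>x\<in>D. \<lfloor>?ch (h + x)\<rfloor>)"
    by (subst sum.reindex) (auto simp: inj_on_def)
  also have "\<dots> = (\<Sum>x\<in>D. \<lfloor>?ch x\<rfloor> + \<lfloor>d x\<rfloor>)"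
  proof (rule sum.cong[OF refl])
    fix x assume "x \<in> D"
    then have "x \<in> G" "x + h \<in> G" using DG h G unfolding addclosed_def by auto
    then show "\<lfloor>?ch (h + x)\<rfloor> = \<lfloor>?ch x\<rfloor> + \<lfloor>d x\<rfloor>"
      unfolding d_def using floor_diff_Ints[OF ints ints] by (simp add: add.commute)
  qed
  also have "\<dots> = (\<Sum>x\<in>D. \<lfloor>?ch x\<rfloor>) + (\<Sum>x\<in>D. \<lfloor>d x\<rfloor>)" by (rule sum.distrib)
  finally have eq: "(\<Sum>x\<in>(+) h ` D. \<lfloor>?ch x\<rfloor>) = (\<Sum>x\<in>D. \<lfloor>?ch x\<rfloor>) + (\<Sum>x\<in>D. \<lfloor>d x\<rfloor>)" .
  have "even (\<Sum>x\<in>(D - (+) h ` D) \<union> ((+) h ` D - D). \<lfloor>?ch x\<rfloor>)"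
    using sum_symdiff_int[OF fin finite_imageI[OF fin], of "\<lambda>x. \<lfloor>?ch x\<rfloor>"] eq evd by simp
  then show ?thesis unfolding valM_def oddsum_def by auto
qed

lemma valM_one:
  assumes fB: "finite B" and ind: "int_independent B"
    and M: "\<And>D'. D' \<in> M \<Longrightarrow> D' \<subseteq> int_span B \<and> finite D'"
    and DM: "D \<in> M" "D \<noteq> {}"
  shows "\<exists>D'\<in>M. valM (int_span B) M D' = 1"
proof -
  obtain k ch where "ch \<in> Pol (int_span B) k" "\<forall>x\<in>int_span B. ch x \<in> \<int>" "(\<Sum>x\<in>D. ch x) = 1"
    using detect[OF fB ind _ _ DM(2)] M[OF DM(1)] by blast
  moreover have "(\<Sum>x\<in>D. \<lfloor>ch x\<rfloor>) = \<lfloor>\<Sum>x\<in>D. ch x\<rfloor>"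
  proof -
    have "(\<Sum>x\<in>D. ch x) = (\<Sum>x\<in>D. real_of_int \<lfloor>ch x\<rfloor>)"
      using M[OF DM(1)] calculation(2) by (intro sum.cong) (auto simp: subset_eq)
    then show ?thesis by (simp only: of_int_sum[symmetric] floor_of_int)
  qed
  ultimately have "goodk (int_span B) M k ch" unfolding goodk_def oddsum_def using DM(1)
    by (intro conjI bexI[of _ D]) auto
  then have ex: "\<exists>k ch. goodk (int_span B) M k ch" by blast
  then obtain D' where "D' \<in> M" "oddsum (chM (int_span B) M) D'"
    using chM_good[OF ex] unfolding goodk_def by auto
  then show ?thesis unfolding valM_def using ex by auto
qed

definition biorth :: "(nat \<Rightarrow> 'v::euclidean_space) \<Rightarrow> (nat \<Rightarrow> 'v) \<Rightarrow> bool" where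
  "biorth u w \<longleftrightarrow> (\<forall>i<DIM('v). \<forall>k<DIM('v). w i \<bullet> u k = (if i = k then 1 else 0)) \<and>
      (\<forall>x. x = (\<Sum>k<DIM('v). (w k \<bullet> x) *\<^sub>R u k))"

definition sg :: "nat set \<Rightarrow> nat \<Rightarrow> real" where
  "sg s k = (if k \<in> s then 1 else -1)"

definition Sreg :: "'v::euclidean_space \<Rightarrow> (nat \<Rightarrow> 'v) \<Rightarrow> nat set \<Rightarrow> real \<Rightarrow> 'v set" where
  "Sreg p w s d = {x. \<forall>k<DIM('v). 0 < sg s k * (w k \<bullet> (x - p)) \<and>
      sg s k * (w k \<bullet> (x - p)) < (if k = 0 then d else d * (sg s (k - 1) * (w (k - 1) \<bullet> (x - p))))}"

lemma sg_pm: "sg s k = 1 \<or> sg s k = -1" unfolding sg_def by auto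

lemma sg_sq: "sg s k * (sg s k * y) = y" unfolding sg_def by auto

lemma sg_abs: "0 < sg s k * y \<Longrightarrow> \<bar>y\<bar> = sg s k * y"
  unfolding sg_def by (auto split: if_splits)

lemma Sreg_abs:
  assumes "x \<in> Sreg (p::'v::euclidean_space) w s d" "k < DIM('v::euclidean_space)"
  shows "\<bar>w k \<bullet> (x - p)\<bar> = sg s k * (w k \<bullet> (x - p))" "0 < \<bar>w k \<bullet> (x - p)\<bar>"
  using assms sg_abs unfolding Sreg_def by force+

lemma Sreg_step:
  assumes "x \<in> Sreg (p::'v::euclidean_space) w s d" "k < DIM('v::euclidean_space)" "0 < k"
  shows "\<bar>w k \<bullet> (x - p)\<bar> < d * \<bar>w (k - 1) \<bullet> (x - p)\<bar>"
proof -
  have "\<bar>w k \<bullet> (x - p)\<bar> = sg s k * (w k \<bullet> (x - p))" using Sreg_abs assms by blast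
  moreover have "\<bar>w (k-1) \<bullet> (x - p)\<bar> = sg s (k-1) * (w (k-1) \<bullet> (x - p))"
    using Sreg_abs[OF assms(1), of "k-1"] assms by simp
  ultimately show ?thesis using assms unfolding Sreg_def by auto
qed

lemma Sreg_zero:
  assumes "x \<in> Sreg (p::'v::euclidean_space) w s d"
  shows "\<bar>w 0 \<bullet> (x - p)\<bar> < d"
  using assms Sreg_abs[OF assms(1), of 0] DIM_positive[where 'a='v] unfolding Sreg_def by (auto dest: spec[of _ 0])

lemma Sreg_small:
  assumes "x \<in> Sreg (p::'v::euclidean_space) w s d" "d \<le> 1" "k < DIM('v::euclidean_space)"
  shows "\<bar>w k \<bullet> (x - (p::'v))\<bar> < d"
  using assms(3)
proof (induction k)
  case 0
  then show ?case using Sreg_zero[OF assms(1)] by simp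
next
  case (Suc k)
  have "\<bar>w (Suc k) \<bullet> (x - p)\<bar> < d * \<bar>w k \<bullet> (x - p)\<bar>" using Sreg_step[OF assms(1) Suc.prems] by simp
  also have "\<dots> \<le> 1 * \<bar>w k \<bullet> (x - p)\<bar>" using assms(2) by (intro mult_right_mono) auto
  also have "\<dots> < d" using Suc by simp
  finally show ?case .
qed

lemma Sreg_decay:
  assumes "x \<in> Sreg (p::'v::euclidean_space) w s d" "d \<le> 1" "0 < d"
  shows "k0 < k \<Longrightarrow> k < DIM('v::euclidean_space) \<Longrightarrow> \<bar>w k \<bullet> (x - (p::'v))\<bar> \<le> d * \<bar>w k0 \<bullet> (x - p)\<bar>"
proof (induction k)
  case 0
  then show ?case by simp
next
  case (Suc k)
  have st: "\<bar>w (Suc k) \<bullet> (x - p)\<bar> < d * \<bar>w k \<bullet> (x - p)\<bar>" using Sreg_step[OF assms(1) Suc.prems(2)] by simp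
  show ?case
  proof (cases "k0 = k")
    case True
    then show ?thesis using st by simp
  next
    case False
    then have "\<bar>w k \<bullet> (x - p)\<bar> \<le> d * \<bar>w k0 \<bullet> (x - p)\<bar>" using Suc by simp
    moreover have "d * \<bar>w k \<bullet> (x - p)\<bar> \<le> 1 * \<bar>w k \<bullet> (x - p)\<bar>"
      using assms(2) by (intro mult_right_mono) auto
    ultimately show ?thesis using st by linarith
  qed
qed

lemma Sreg_mono:
  assumes "d1 \<le> d2"
  shows "Sreg (p::'v::euclidean_space) w s d1 \<subseteq> Sreg p w s d2"
proof
  fix x assume x: "x \<in> Sreg p w s d1"
  have "sg s k * (w k \<bullet> (x - p)) < (if k = 0 then d2 else d2 * (sg s (k - 1) * (w (k - 1) \<bullet> (x - p))))"
    if k: "k < DIM('v)" for k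
  proof (cases "k = 0")
    case True
    then show ?thesis using x k assms unfolding Sreg_def by (auto dest: spec[of _ 0])
  next
    case False
    have "0 < sg s (k - 1) * (w (k - 1) \<bullet> (x - p))" using x k unfolding Sreg_def by auto
    then have "d1 * (sg s (k - 1) * (w (k - 1) \<bullet> (x - p))) \<le> d2 * (sg s (k - 1) * (w (k - 1) \<bullet> (x - p)))"
      using assms by (intro mult_right_mono) auto
    then show ?thesis using x k False unfolding Sreg_def by force
  qed
  then show "x \<in> Sreg p w s d2" using x unfolding Sreg_def by auto
qed

lemma Sreg_open: "open (Sreg (p::'v::euclidean_space) w s d)"
proof -
  define P where "P k x \<longleftrightarrow> 0 < sg s k * (w k \<bullet> (x - p)) \<and>
      sg s k * (w k \<bullet> (x - p)) < (if k = 0 then d else d * (sg s (k - 1) * (w (k - 1) \<bullet> (x - p))))" for k x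
  have "Sreg p w s d = {x. \<forall>k\<in>{..<DIM('v)}. P k x}" unfolding Sreg_def P_def Ball_def lessThan_iff ..
  also have "\<dots> = (\<Inter>k\<in>{..<DIM('v)}. {x. P k x})" by blast
  also have "open \<dots>"
  proof (intro open_INT finite_lessThan ballI)
    fix k
    show "open {x. P k x}"
    proof (cases "k = 0")
      case True
      then show ?thesis unfolding P_def by (simp, intro open_Collect_conj open_Collect_less continuous_intros)
    next
      case False
      then show ?thesis unfolding P_def by (simp, intro open_Collect_conj open_Collect_less continuous_intros)
    qed
  qed
  finally show ?thesis .
qed

lemma biorth_inner:
  assumes "biorth u (w :: nat \<Rightarrow> 'v::euclidean_space)" "i < DIM('v)" "k < DIM('v)"
  shows "w i \<bullet> u k = (if i = k then 1 else (0::real))" using assms unfolding biorth_def by auto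

lemma biorth_rep:
  assumes "biorth u (w :: nat \<Rightarrow> 'v::euclidean_space)"
  shows "x = (\<Sum>k<DIM('v). (w k \<bullet> x) *\<^sub>R u k)" using assms unfolding biorth_def by auto

lemma biorth_coord:
  assumes "biorth u (w :: nat \<Rightarrow> 'v::euclidean_space)" "i < DIM('v)"
  shows "w i \<bullet> (\<Sum>k<DIM('v). c k *\<^sub>R u k) = c i"
proof -
  have "w i \<bullet> (\<Sum>k<DIM('v). c k *\<^sub>R u k) = (\<Sum>k<DIM('v). c k * (w i \<bullet> u k))"
    by (simp add: inner_sum_right)
  also have "\<dots> = (\<Sum>k<DIM('v). if k = i then c k else 0)"
    using biorth_inner[OF assms(1) assms(2)] by (intro sum.cong) auto
  also have "\<dots> = c i" using assms(2) by simp
  finally show ?thesis .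
qed

lemma Sreg_nonempty:
  assumes "biorth u (w :: nat \<Rightarrow> 'v::euclidean_space)" "0 < d"
  shows "Sreg p w s d \<noteq> {}"
proof -
  define x where "x = p + (\<Sum>k<DIM('v). (sg s k * (d/2)^(Suc k)) *\<^sub>R u k)"
  have c: "w k \<bullet> (x - p) = sg s k * (d/2)^(Suc k)" if "k < DIM('v)" for k
    unfolding x_def using biorth_coord[OF assms(1) that] by simp
  have sq: "0 < sg s k * (sg s k * y)" if "0 < y" for k y using that unfolding sg_def by auto
  have "x \<in> Sreg p w s d"
    unfolding Sreg_def
  proof (intro CollectI allI impI conjI)
    fix k assume k: "k < DIM('v)"
    show "0 < sg s k * (w k \<bullet> (x - p))" unfolding c[OF k] using assms(2) by (intro sq) simp
    show "sg s k * (w k \<bullet> (x - p)) < (if k = 0 then d else d * (sg s (k - 1) * (w (k - 1) \<bullet> (x - p))))"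
    proof (cases k)
      case 0
      then show ?thesis using c[OF k] assms(2) unfolding sg_def by auto
    next
      case (Suc k')
      have "(d/2)^(Suc (Suc k')) < d * (d/2)^(Suc k')"
        using assms(2) by (simp add: power_Suc[of "d/2" "Suc k'"] mult_strict_right_mono del: power_Suc)
      have k1: "k - 1 < DIM('v)" using k by simp
      have e1: "sg s k * (w k \<bullet> (x - p)) = (d/2)^(Suc k)" by (simp only: c[OF k] sg_sq)
      have e2: "sg s (k-1) * (w (k-1) \<bullet> (x - p)) = (d/2)^(Suc (k-1))" by (simp only: c[OF k1] sg_sq)
      have "k \<noteq> 0" using Suc by simp
      then show ?thesis unfolding e1 e2 if_not_P[OF \<open>k \<noteq> 0\<close>]
        using Suc \<open>(d/2)^(Suc (Suc k')) < d * (d/2)^(Suc k')\<close> by (simp del: power_Suc)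
    qed
  qed
  then show ?thesis by auto
qed

definition kmin :: "'v::euclidean_space \<Rightarrow> (nat \<Rightarrow> 'v) \<Rightarrow> nat" where
  "kmin a u = (LEAST k. a \<bullet> u k \<noteq> 0)"

definition sgnv :: "'v::euclidean_space \<Rightarrow> real \<Rightarrow> 'v \<Rightarrow> (nat \<Rightarrow> 'v) \<Rightarrow> nat set \<Rightarrow> bool" where
  "sgnv a b p u s = (if a \<bullet> p \<noteq> b then a \<bullet> p < b else sg s (kmin a u) * (a \<bullet> u (kmin a u)) < 0)"

lemma kmin_props:
  assumes "biorth u (w :: nat \<Rightarrow> 'v::euclidean_space)" "a \<noteq> 0"
  shows "kmin a u < DIM('v)" "a \<bullet> u (kmin a u) \<noteq> 0" "\<And>k. k < kmin a u \<Longrightarrow> a \<bullet> u k = 0"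
proof -
  have ex: "\<exists>k<DIM('v). a \<bullet> u k \<noteq> 0"
  proof (rule ccontr)
    assume "\<not> ?thesis"
    then have "\<forall>k<DIM('v). a \<bullet> u k = 0" by auto
    moreover have "a \<bullet> a = (\<Sum>k<DIM('v). (w k \<bullet> a) * (a \<bullet> u k))"
      by (subst (2) biorth_rep[OF assms(1), of a]) (simp add: inner_sum_right)
    ultimately have "a \<bullet> a = 0" by simp
    then show False using assms(2) by simp
  qed
  then obtain k where k: "k < DIM('v)" "a \<bullet> u k \<noteq> 0" by blast
  show "a \<bullet> u (kmin a u) \<noteq> 0" unfolding kmin_def using LeastI[of "\<lambda>k. a \<bullet> u k \<noteq> 0" k] k(2) by simp
  have "kmin a u \<le> k" unfolding kmin_def using k by (intro Least_le) 
  then show "kmin a u < DIM('v)" using k by simp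
  show "\<And>k. k < kmin a u \<Longrightarrow> a \<bullet> u k = 0" unfolding kmin_def using not_less_Least by blast
qed

lemma inner_expand:
  assumes "biorth u (w :: nat \<Rightarrow> 'v::euclidean_space)"
  shows "a \<bullet> y = (\<Sum>k<DIM('v). (w k \<bullet> y) * (a \<bullet> u k))"
  by (subst biorth_rep[OF assms, of y]) (simp add: inner_sum_right)

lemma sign_lemma:
  assumes bi: "biorth u (w :: nat \<Rightarrow> 'v::euclidean_space)" and a: "a \<noteq> 0"
  shows "\<exists>d>0. d \<le> 1 \<and> (\<forall>x\<in>Sreg p w s d. (a \<bullet> x \<le> b) = sgnv a b p u s \<and> a \<bullet> x \<noteq> b)"
proof -
  define N where "N = (\<Sum>k<DIM('v). \<bar>a \<bullet> u k\<bar>)"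
  have N0: "N \<ge> 0" unfolding N_def by (simp add: sum_nonneg)
  have expand: "a \<bullet> x - b = (a \<bullet> p - b) + (\<Sum>k<DIM('v). (w k \<bullet> (x - p)) * (a \<bullet> u k))" for x
    using inner_expand[OF bi, of a "x - p"] by (simp add: inner_diff_right)
  show ?thesis
  proof (cases "a \<bullet> p = b")
    case False
    define e where "e = \<bar>a \<bullet> p - b\<bar>"
    have e0: "e > 0" using False unfolding e_def by simp
    define d where "d = min 1 (e / (N + 1))"
    have d0: "d > 0" "d \<le> 1" unfolding d_def using e0 N0 by auto
    have dN: "d * N < e"
    proof -
      have "d * N \<le> e / (N + 1) * N" unfolding d_def using N0 by (intro mult_right_mono) auto
      also have "\<dots> < e" using e0 N0 by (simp add: field_simps)
      finally show ?thesis .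
    qed
    have "(a \<bullet> x \<le> b) = sgnv a b p u s \<and> a \<bullet> x \<noteq> b" if x: "x \<in> Sreg p w s d" for x
    proof -
      have "\<bar>\<Sum>k<DIM('v). (w k \<bullet> (x - p)) * (a \<bullet> u k)\<bar> \<le> (\<Sum>k<DIM('v). \<bar>(w k \<bullet> (x - p)) * (a \<bullet> u k)\<bar>)"
        by (rule sum_abs)
      also have "\<dots> \<le> (\<Sum>k<DIM('v). d * \<bar>a \<bullet> u k\<bar>)"
      proof (rule sum_mono)
        fix k assume "k \<in> {..<DIM('v)}"
        then have "\<bar>w k \<bullet> (x - p)\<bar> \<le> d" using Sreg_small[OF x d0(2)] by (simp add: less_imp_le)
        then show "\<bar>(w k \<bullet> (x - p)) * (a \<bullet> u k)\<bar> \<le> d * \<bar>a \<bullet> u k\<bar>"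
          by (simp add: abs_mult mult_right_mono)
      qed
      also have "\<dots> = d * N" unfolding N_def by (simp add: sum_distrib_left)
      finally have "\<bar>\<Sum>k<DIM('v). (w k \<bullet> (x - p)) * (a \<bullet> u k)\<bar> < e" using dN by simp
      then show ?thesis using expand[of x] False unfolding sgnv_def e_def by auto
    qed
    then show ?thesis using d0 by blast
  next
    case True
    define k0 where "k0 = kmin a u"
    have k0: "k0 < DIM('v)" "a \<bullet> u k0 \<noteq> 0" "\<And>k. k < k0 \<Longrightarrow> a \<bullet> u k = 0"
      using kmin_props[OF bi a] unfolding k0_def by auto
    define e where "e = \<bar>a \<bullet> u k0\<bar>"
    have e0: "e > 0" using k0 unfolding e_def by simp
    define d where "d = min 1 (e / (N + 1))"
    have d0: "d > 0" "d \<le> 1" unfolding d_def using e0 N0 by auto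
    have dN: "d * N < e"
    proof -
      have "d * N \<le> e / (N + 1) * N" unfolding d_def using N0 by (intro mult_right_mono) auto
      also have "\<dots> < e" using e0 N0 by (simp add: field_simps)
      finally show ?thesis .
    qed
    have "(a \<bullet> x \<le> b) = sgnv a b p u s \<and> a \<bullet> x \<noteq> b" if x: "x \<in> Sreg p w s d" for x
    proof -
      define t where "t k = w k \<bullet> (x - p)" for k
      have tpos: "\<bar>t k0\<bar> > 0" using Sreg_abs[OF x k0(1)] unfolding t_def by simp
      have tsg: "t k0 = sg s k0 * \<bar>t k0\<bar>"
        using Sreg_abs(1)[OF x k0(1)] sg_sq[of s k0 "t k0"] unfolding t_def by simp
      have split: "(\<Sum>k<DIM('v). t k * (a \<bullet> u k)) = t k0 * (a \<bullet> u k0) + (\<Sum>k\<in>{..<DIM('v)} - {k0}. t k * (a \<bullet> u k))"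
        using k0(1) by (simp add: sum.remove)
      have "\<bar>\<Sum>k\<in>{..<DIM('v)} - {k0}. t k * (a \<bullet> u k)\<bar> \<le> (\<Sum>k\<in>{..<DIM('v)} - {k0}. \<bar>t k * (a \<bullet> u k)\<bar>)"
        by (rule sum_abs)
      also have "\<dots> \<le> (\<Sum>k\<in>{..<DIM('v)} - {k0}. d * \<bar>t k0\<bar> * \<bar>a \<bullet> u k\<bar>)"
      proof (rule sum_mono)
        fix k assume k: "k \<in> {..<DIM('v)} - {k0}"
        show "\<bar>t k * (a \<bullet> u k)\<bar> \<le> d * \<bar>t k0\<bar> * \<bar>a \<bullet> u k\<bar>"
        proof (cases "k < k0")
          case True
          then show ?thesis using k0(3) by (simp add: mult_nonneg_nonneg)
        next
          case False
          then have "k0 < k" using k by auto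
          then have "\<bar>t k\<bar> \<le> d * \<bar>t k0\<bar>" using Sreg_decay[OF x d0(2) d0(1)] k unfolding t_def by auto
          then show ?thesis by (simp add: abs_mult mult_right_mono)
        qed
      qed
      also have "\<dots> \<le> (\<Sum>k<DIM('v). d * \<bar>t k0\<bar> * \<bar>a \<bullet> u k\<bar>)"
        by (rule sum_mono2) (use d0 in auto)
      also have "\<dots> = \<bar>t k0\<bar> * (d * N)" unfolding N_def by (simp add: sum_distrib_left mult_ac)
      also have "\<dots> < \<bar>t k0\<bar> * e" using tpos dN by simp
      finally have rest: "\<bar>\<Sum>k\<in>{..<DIM('v)} - {k0}. t k * (a \<bullet> u k)\<bar> < \<bar>t k0 * (a \<bullet> u k0)\<bar>"
        unfolding e_def by (simp add: abs_mult)
      have ax: "a \<bullet> x - b = t k0 * (a \<bullet> u k0) + (\<Sum>k\<in>{..<DIM('v)} - {k0}. t k * (a \<bullet> u k))"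
        using expand[of x] True split unfolding t_def by simp
      have "(a \<bullet> x \<le> b) \<longleftrightarrow> t k0 * (a \<bullet> u k0) < 0" using ax rest by (auto simp: abs_if split: if_splits)
      also have "\<dots> \<longleftrightarrow> sg s k0 * (a \<bullet> u k0) < 0"
      proof -
        have eq: "t k0 * (a \<bullet> u k0) = \<bar>t k0\<bar> * (sg s k0 * (a \<bullet> u k0))" by (subst tsg) (simp add: mult_ac)
        have "\<And>y. (\<bar>t k0\<bar> * y < 0) = (y < 0)" using tpos by (simp add: mult_less_0_iff)
        then show ?thesis by (simp only: eq)
      qed
      finally have 1: "(a \<bullet> x \<le> b) = sgnv a b p u s" unfolding sgnv_def k0_def using True by simp
      have "a \<bullet> x \<noteq> b" using ax rest by auto
      then show ?thesis using 1 by simp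
    qed
    then show ?thesis using d0 by blast
  qed
qed

definition hasg :: "'v::euclidean_space set set \<Rightarrow> ('v \<Rightarrow> int) \<Rightarrow> 'v \<Rightarrow> (nat \<Rightarrow> 'v) \<Rightarrow> nat set \<Rightarrow> int \<Rightarrow> bool" where
  "hasg C f p w s c \<longleftrightarrow> (\<exists>d>0. \<forall>x\<in>Sreg p w s d \<inter> V' C. f x = c)"

definition germ :: "'v::euclidean_space set set \<Rightarrow> ('v \<Rightarrow> int) \<Rightarrow> 'v \<Rightarrow> (nat \<Rightarrow> 'v) \<Rightarrow> nat set \<Rightarrow> int" where
  "germ C f p w s = (THE c. hasg C f p w s c)"

definition cellconst :: "'v::euclidean_space set set \<Rightarrow> ('v \<Rightarrow> int) \<Rightarrow> ('v \<times> real) set \<Rightarrow> bool" where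
  "cellconst C f A \<longleftrightarrow> finite A \<and> (\<forall>(a,b)\<in>A. a \<noteq> 0) \<and>
     (\<forall>x\<in>V' C. \<forall>y\<in>V' C. (\<forall>(a,b)\<in>A. (a \<bullet> x \<le> b) = (a \<bullet> y \<le> b)) \<longrightarrow> f x = f y)"

definition goodC :: "'v::euclidean_space set set \<Rightarrow> bool" where
  "goodC C \<longleftrightarrow> (\<forall>H\<in>C. affine_hyperplane H) \<and> countable C"

lemma open_meets_V':
  assumes "goodC C" "open S" "S \<noteq> {}"
  shows "S \<inter> V' C \<noteq> {}"
proof
  assume "S \<inter> V' C = {}"
  then have sub: "S \<subseteq> \<Union>C" unfolding V'_def by auto
  have "negligible (\<Union>C)"
  proof (rule negligible_countable_Union)
    show "countable C" using assms(1) unfolding goodC_def by auto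
    fix H assume "H \<in> C"
    then obtain a b where "a \<noteq> 0" "H = {x. a \<bullet> x = b}"
      using assms(1) unfolding goodC_def affine_hyperplane_def by blast
    then show "negligible H" using negligible_hyperplane by blast
  qed
  then have "negligible S" using sub negligible_subset by blast
  then show False using open_not_negligible assms by blast
qed

lemma Sreg_V'_ne:
  assumes "goodC C" "biorth u (w :: nat \<Rightarrow> 'v::euclidean_space)" "0 < d"
  shows "Sreg p w s d \<inter> V' C \<noteq> {}"
  using open_meets_V'[OF assms(1) Sreg_open Sreg_nonempty[OF assms(2,3)]] .

lemma hasg_unique:
  assumes "goodC C" "biorth u (w :: nat \<Rightarrow> 'v::euclidean_space)" "hasg C f p w s c1" "hasg C f p w s c2"
  shows "c1 = c2"
proof -
  obtain d1 where d1: "d1 > 0" "\<forall>x\<in>Sreg p w s d1 \<inter> V' C. f x = c1" using assms(3) unfolding hasg_def by auto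
  obtain d2 where d2: "d2 > 0" "\<forall>x\<in>Sreg p w s d2 \<inter> V' C. f x = c2" using assms(4) unfolding hasg_def by auto
  obtain x where x: "x \<in> Sreg p w s (min d1 d2) \<inter> V' C" using Sreg_V'_ne[OF assms(1,2), of "min d1 d2" p s] d1 d2 by auto
  have s1: "Sreg p w s (min d1 d2) \<subseteq> Sreg p w s d1" and s2: "Sreg p w s (min d1 d2) \<subseteq> Sreg p w s d2"
    by (rule Sreg_mono, simp)+
  have "f x = c1" using x s1 d1(2) by blast
  moreover have "f x = c2" using x s2 d2(2) by blast
  ultimately show ?thesis by simp
qed

lemma germ_eq:
  assumes "goodC C" "biorth u (w :: nat \<Rightarrow> 'v::euclidean_space)" "hasg C f p w s c"
  shows "germ C f p w s = c"
  unfolding germ_def using hasg_unique[OF assms(1,2)] assms(3) by blast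

lemma hasg_binop:
  assumes "hasg C f p w s c1" "hasg C g p w s c2"
  shows "hasg C (\<lambda>x. F (f x) (g x)) p w s (F c1 c2)"
proof -
  obtain d1 where d1: "d1 > 0" "\<forall>x\<in>Sreg p w s d1 \<inter> V' C. f x = c1" using assms(1) unfolding hasg_def by auto
  obtain d2 where d2: "d2 > 0" "\<forall>x\<in>Sreg p w s d2 \<inter> V' C. g x = c2" using assms(2) unfolding hasg_def by auto
  have s1: "Sreg p w s (min d1 d2) \<subseteq> Sreg p w s d1" and s2: "Sreg p w s (min d1 d2) \<subseteq> Sreg p w s d2"
    by (rule Sreg_mono, simp)+
  have "\<forall>x\<in>Sreg p w s (min d1 d2) \<inter> V' C. F (f x) (g x) = F c1 c2"
  proof
    fix x assume x: "x \<in> Sreg p w s (min d1 d2) \<inter> V' C"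
    then have "f x = c1" using d1(2) s1 by blast
    moreover have "g x = c2" using x d2(2) s2 by blast
    ultimately show "F (f x) (g x) = F c1 c2" by simp
  qed
  then show ?thesis unfolding hasg_def using d1 d2 by (intro exI[of _ "min d1 d2"]) auto
qed

lemma cell_sreg:
  assumes bi: "biorth u (w :: nat \<Rightarrow> 'v::euclidean_space)" and fin: "finite A" and nz: "\<forall>(a,b)\<in>A. a \<noteq> 0"
  shows "\<exists>d>0. \<forall>x\<in>Sreg p w s d. \<forall>(a,b)\<in>A. (a \<bullet> x \<le> b) = sgnv a b p u s"
  using fin nz
proof (induction A rule: finite_induct)
  case empty
  then show ?case by (intro exI[of _ 1]) auto
next
  case (insert ab A)
  obtain a b where ab: "ab = (a, b)" by fastforce
  obtain d1 where d1: "d1 > 0" "\<forall>x\<in>Sreg p w s d1. \<forall>(a,b)\<in>A. (a \<bullet> x \<le> b) = sgnv a b p u s"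
    using insert by auto
  have "a \<noteq> 0" using insert.prems ab by auto
  from sign_lemma[OF bi this, of p s b] obtain d2 where
    d2: "d2 > 0" "\<forall>x\<in>Sreg p w s d2. (a \<bullet> x \<le> b) = sgnv a b p u s \<and> a \<bullet> x \<noteq> b"
    by blast
  have s1: "Sreg p w s (min d1 d2) \<subseteq> Sreg p w s d1" and s2: "Sreg p w s (min d1 d2) \<subseteq> Sreg p w s d2"
    by (rule Sreg_mono, simp)+
  have "\<forall>x\<in>Sreg p w s (min d1 d2). \<forall>(a',b')\<in>insert ab A. (a' \<bullet> x \<le> b') = sgnv a' b' p u s"
  proof (intro ballI, clarify)
    fix x a' b' assume x: "x \<in> Sreg p w s (min d1 d2)" and ab': "(a', b') \<in> insert ab A"
    show "(a' \<bullet> x \<le> b') = sgnv a' b' p u s"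
    proof (cases "(a', b') = ab")
      case True
      then show ?thesis using d2(2) x s2 ab by auto
    next
      case False
      then have "(a', b') \<in> A" using ab' by auto
      moreover have "x \<in> Sreg p w s d1" using x s1 by blast
      ultimately show ?thesis using d1(2) by auto
    qed
  qed
  then show ?case using d1(1) d2(1) by (intro exI[of _ "min d1 d2"]) auto
qed

lemma cellconst_germ:
  assumes gC: "goodC C" and bi: "biorth u (w :: nat \<Rightarrow> 'v::euclidean_space)" and cc: "cellconst C f A"
  shows "\<exists>d>0. \<forall>x\<in>Sreg p w s d \<inter> V' C. (\<forall>(a,b)\<in>A. (a \<bullet> x \<le> b) = sgnv a b p u s) \<and> f x = germ C f p w s"
proof -
  have fA: "finite A" and nzA: "\<forall>(a,b)\<in>A. a \<noteq> 0" using cc unfolding cellconst_def by auto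
  obtain d where d: "d > 0" "\<forall>x\<in>Sreg p w s d. \<forall>(a,b)\<in>A. (a \<bullet> x \<le> b) = sgnv a b p u s"
    using cell_sreg[OF bi fA nzA] by blast
  obtain x0 where x0: "x0 \<in> Sreg p w s d \<inter> V' C" using Sreg_V'_ne[OF gC bi d(1)] by auto
  have eq: "f x = f x0" if "x \<in> Sreg p w s d \<inter> V' C" for x
  proof -
    have hx: "\<forall>(a,b)\<in>A. (a \<bullet> x \<le> b) = sgnv a b p u s" using d(2) that by blast
    have hx0: "\<forall>(a,b)\<in>A. (a \<bullet> x0 \<le> b) = sgnv a b p u s" using d(2) x0 by blast
    have "\<forall>(a,b)\<in>A. (a \<bullet> x \<le> b) = (a \<bullet> x0 \<le> b)"
    proof (intro ballI, clarify)
      fix a b assume ab: "(a, b) \<in> A"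
      have "(a \<bullet> x \<le> b) = sgnv a b p u s" using hx ab by auto
      moreover have "(a \<bullet> x0 \<le> b) = sgnv a b p u s" using hx0 ab by auto
      ultimately show "(a \<bullet> x \<le> b) = (a \<bullet> x0 \<le> b)" by simp
    qed
    then show ?thesis using cc that x0 unfolding cellconst_def by blast
  qed
  then have "hasg C f p w s (f x0)" unfolding hasg_def using d(1) by blast
  then have "germ C f p w s = f x0" by (rule germ_eq[OF gC bi])
  then show ?thesis using d eq by (intro exI[of _ d]) auto
qed

lemma cellconst_hasg:
  assumes gC: "goodC C" and bi: "biorth u (w :: nat \<Rightarrow> 'v::euclidean_space)" and cc: "cellconst C f A"
  shows "hasg C f p w s (germ C f p w s)"
  using cellconst_germ[OF assms, of p s] unfolding hasg_def by blast

definition Vert :: "('v::euclidean_space \<times> real) set \<Rightarrow> 'v set" where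
  "Vert A = {p. \<exists>Bs\<subseteq>A. \<Inter>((\<lambda>(a,b). {x. a \<bullet> x = b}) ` Bs) = {p}}"

lemma finite_Vert: "finite A \<Longrightarrow> finite (Vert A)"
proof -
  assume "finite A"
  have "Vert A \<subseteq> (\<lambda>Bs. the_elem (\<Inter>((\<lambda>(a,b). {x. a \<bullet> x = b}) ` Bs))) ` Pow A"
  proof
    fix p assume "p \<in> Vert A"
    then obtain Bs where "Bs \<subseteq> A" "\<Inter>((\<lambda>(a,b). {x. a \<bullet> x = b}) ` Bs) = {p}" unfolding Vert_def by blast
    then show "p \<in> (\<lambda>Bs. the_elem (\<Inter>((\<lambda>(a,b). {x. a \<bullet> x = b}) ` Bs))) ` Pow A"
      by (intro image_eqI[of _ _ Bs]) auto
  qed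
  then show ?thesis using \<open>finite A\<close> by (meson finite_Pow_iff finite_imageI finite_subset)
qed

lemma pair_even:
  fixes g :: "nat set \<Rightarrow> int"
  assumes "finite I" "j \<in> I" "\<And>s. s \<subseteq> I - {j} \<Longrightarrow> g (insert j s) = g s"
  shows "even (\<Sum>s\<in>Pow I. g s)"
proof -
  have I: "I = insert j (I - {j})" using assms(2) by auto
  have "Pow I = Pow (I - {j}) \<union> insert j ` Pow (I - {j})" by (subst I) (rule Pow_insert)
  then have "(\<Sum>s\<in>Pow I. g s) = (\<Sum>s\<in>Pow (I - {j}). g s) + (\<Sum>s\<in>insert j ` Pow (I - {j}). g s)"
    using assms(1) by (simp add: sum.union_disjoint, subst sum.union_disjoint) auto
  also have "(\<Sum>s\<in>insert j ` Pow (I - {j}). g s) = (\<Sum>s\<in>Pow (I - {j}). g (insert j s))"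
    by (rule sum.reindex_cong[where l="insert j"]) (auto simp: inj_on_def)
  also have "\<dots> = (\<Sum>s\<in>Pow (I - {j}). g s)" using assms(3) by (intro sum.cong) auto
  finally show ?thesis by simp
qed

lemma sgnv_flip:
  assumes "k \<noteq> j"
  shows "sg (insert j s) k = sg s k" "sg (s - {j}) k = sg s k"
  using assms unfolding sg_def by auto

lemma odd_vertex:
  assumes gC: "goodC C" and bi: "biorth u (w :: nat \<Rightarrow> 'v::euclidean_space)" and cc: "cellconst C f A"
    and odd: "odd (\<Sum>s\<in>Pow {..<DIM('v)}. germ C f p w s)"
  shows "p \<in> Vert A"
proof (rule ccontr)
  assume nv: "p \<notin> Vert A"
  define Bs where "Bs = {(a,b). (a,b) \<in> A \<and> a \<bullet> p = b}"
  have nz: "\<forall>(a,b)\<in>A. a \<noteq> 0" using cc unfolding cellconst_def by auto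
  have "p \<in> \<Inter>((\<lambda>(a,b). {x. a \<bullet> x = b}) ` Bs)" unfolding Bs_def by auto
  moreover have "Bs \<subseteq> A" unfolding Bs_def by auto
  ultimately obtain q where q: "q \<in> \<Inter>((\<lambda>(a,b). {x. a \<bullet> x = b}) ` Bs)" "q \<noteq> p"
    using nv unfolding Vert_def by blast
  define z where "z = q - p"
  have z0: "z \<noteq> 0" using q unfolding z_def by auto
  have az: "a \<bullet> z = 0" if "(a,b) \<in> Bs" for a b
    using q(1) that unfolding z_def Bs_def by (force simp: inner_diff_right)
  have "\<exists>j<DIM('v). \<forall>(a,b)\<in>Bs. kmin a u \<noteq> j"
  proof (rule ccontr)
    assume "\<not> ?thesis"
    then have all: "\<forall>j<DIM('v). \<exists>(a,b)\<in>Bs. kmin a u = j" by auto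
    define K where "K = {k. k < DIM('v) \<and> w k \<bullet> z \<noteq> 0}"
    have "K \<noteq> {}"
    proof
      assume "K = {}"
      then have "\<forall>k<DIM('v). w k \<bullet> z = 0" unfolding K_def by auto
      then have "z = 0" by (subst biorth_rep[OF bi]) simp
      then show False using z0 by simp
    qed
    moreover have fK: "finite K" unfolding K_def by auto
    ultimately have kk: "Max K \<in> K" "\<And>k. k \<in> K \<Longrightarrow> k \<le> Max K" by auto
    define kk where "kk = Max K"
    have kkm: "kk < DIM('v)" "w kk \<bullet> z \<noteq> 0" using kk unfolding K_def kk_def by auto
    obtain a b where ab: "(a,b) \<in> Bs" "kmin a u = kk" using all kkm by blast
    have anz: "a \<noteq> 0" using ab nz unfolding Bs_def by auto
    have "a \<bullet> z = (\<Sum>k<DIM('v). (w k \<bullet> z) * (a \<bullet> u k))" by (rule inner_expand[OF bi])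
    also have "\<dots> = (\<Sum>k<DIM('v). if k = kk then (w kk \<bullet> z) * (a \<bullet> u kk) else 0)"
    proof (rule sum.cong[OF refl])
      fix k assume k: "k \<in> {..<DIM('v)}"
      show "(w k \<bullet> z) * (a \<bullet> u k) = (if k = kk then (w kk \<bullet> z) * (a \<bullet> u kk) else 0)"
      proof (cases "k < kk")
        case True
        then show ?thesis using kmin_props(3)[OF bi anz] ab by auto
      next
        case False
        moreover have "k > kk \<Longrightarrow> w k \<bullet> z = 0"
        proof (rule ccontr)
          assume "k > kk" "w k \<bullet> z \<noteq> 0"
          then have "k \<in> K" using k unfolding K_def by auto
          then have "k \<le> kk" using kk(2) unfolding kk_def by auto
          then show False using \<open>k > kk\<close> by simp
        qed
        ultimately show ?thesis by (cases "k = kk") auto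
      qed
    qed
    also have "\<dots> = (w kk \<bullet> z) * (a \<bullet> u kk)" using kkm by simp
    finally have "a \<bullet> z \<noteq> 0" using kkm kmin_props(2)[OF bi anz] ab by simp
    then show False using az ab by blast
  qed
  then obtain j where j: "j < DIM('v)" "\<forall>(a,b)\<in>Bs. kmin a u \<noteq> j" by blast
  have flip: "germ C f p w (insert j s) = germ C f p w s" if "s \<subseteq> {..<DIM('v)} - {j}" for s
  proof -
    obtain d1 where d1: "d1 > 0" "\<forall>x\<in>Sreg p w (insert j s) d1 \<inter> V' C. (\<forall>(a,b)\<in>A. (a \<bullet> x \<le> b) = sgnv a b p u (insert j s)) \<and> f x = germ C f p w (insert j s)"
      using cellconst_germ[OF gC bi cc] by blast
    obtain d2 where d2: "d2 > 0" "\<forall>x\<in>Sreg p w s d2 \<inter> V' C. (\<forall>(a,b)\<in>A. (a \<bullet> x \<le> b) = sgnv a b p u s) \<and> f x = germ C f p w s"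
      using cellconst_germ[OF gC bi cc] by blast
    obtain x where x: "x \<in> Sreg p w (insert j s) d1 \<inter> V' C" using Sreg_V'_ne[OF gC bi d1(1)] by blast
    obtain y where y: "y \<in> Sreg p w s d2 \<inter> V' C" using Sreg_V'_ne[OF gC bi d2(1)] by blast
    have "sgnv a b p u (insert j s) = sgnv a b p u s" if "(a,b) \<in> A" for a b
    proof (cases "a \<bullet> p = b")
      case True
      then have "(a,b) \<in> Bs" using that unfolding Bs_def by auto
      then have "kmin a u \<noteq> j" using j by auto
      then show ?thesis unfolding sgnv_def using sgnv_flip by simp
    next
      case False
      then show ?thesis unfolding sgnv_def by simp
    qed
    then have "\<forall>(a,b)\<in>A. (a \<bullet> x \<le> b) = (a \<bullet> y \<le> b)" using d1 d2 x y by fastforce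
    then have "f x = f y" using cc x y unfolding cellconst_def by blast
    then show ?thesis using d1 d2 x y by auto
  qed
  have "even (\<Sum>s\<in>Pow {..<DIM('v)}. germ C f p w s)"
    by (rule pair_even[of _ j]) (use j flip in auto)
  then show False using odd by simp
qed

lemma cellconst_binop:
  assumes "cellconst C f A1" "cellconst C g A2"
  shows "cellconst C (\<lambda>x. F (f x) (g x)) (A1 \<union> A2)"
  unfolding cellconst_def
proof (intro conjI ballI impI)
  show "finite (A1 \<union> A2)" using assms unfolding cellconst_def by simp
  show "\<And>p. p \<in> A1 \<union> A2 \<Longrightarrow> case p of (a,b) \<Rightarrow> a \<noteq> 0" using assms unfolding cellconst_def by blast
  fix x y assume xy: "x \<in> V' C" "y \<in> V' C" "\<forall>(a,b)\<in>A1 \<union> A2. (a \<bullet> x \<le> b) = (a \<bullet> y \<le> b)"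
  have "\<forall>(a,b)\<in>A1. (a \<bullet> x \<le> b) = (a \<bullet> y \<le> b)" using xy(3) by blast
  then have "f x = f y" using assms(1) xy(1,2) unfolding cellconst_def by blast
  moreover have "\<forall>(a,b)\<in>A2. (a \<bullet> x \<le> b) = (a \<bullet> y \<le> b)" using xy(3) by blast
  then have "g x = g y" using assms(2) xy(1,2) unfolding cellconst_def by blast
  ultimately show "F (f x) (g x) = F (f y) (g y)" by simp
qed

lemma ex_pair: "\<exists>a b. P a b \<Longrightarrow> \<exists>p. (\<lambda>(a,b). P a b) p" by auto

lemma CV_cellconst:
  fixes C :: "'v::euclidean_space set set"
  assumes "f \<in> CV C"
  shows "\<exists>A. cellconst C f A"
  using assms
proof (induction rule: CV.induct)
  case (gen P)
  then have "polyhedron P" unfolding C_tope_def using polytope_eq_bounded_polyhedron by blast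
  then obtain F where F: "finite F" "P = \<Inter>F" "\<forall>h\<in>F. \<exists>a b. a \<noteq> 0 \<and> h = {x. a \<bullet> x \<le> b}"
    unfolding polyhedron_def by blast
  define ab where "ab (h :: 'v set) = (SOME (a,b). a \<noteq> 0 \<and> h = {x. a \<bullet> x \<le> b})" for h
  have abh: "fst (ab h) \<noteq> 0 \<and> h = {x. fst (ab h) \<bullet> x \<le> snd (ab h)}" if "h \<in> F" for h
  proof -
    have "\<exists>p. (\<lambda>(a,b). a \<noteq> 0 \<and> h = {x. a \<bullet> x \<le> b}) p"
      by (rule ex_pair) (rule bspec[OF F(3) that])
    then have "(\<lambda>(a,b). a \<noteq> 0 \<and> h = {x. a \<bullet> x \<le> b}) (ab h)" unfolding ab_def by (rule someI_ex)
    then show ?thesis by (simp add: case_prod_beta)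
  qed
  have memh: "x \<in> h \<longleftrightarrow> fst (ab h) \<bullet> x \<le> snd (ab h)" if "h \<in> F" for h x
  proof -
    have "h = {x. fst (ab h) \<bullet> x \<le> snd (ab h)}" using abh[OF that] by (rule conjunct2)
    then show ?thesis by (metis mem_Collect_eq)
  qed
  have memP: "x \<in> P \<longleftrightarrow> (\<forall>h\<in>F. fst (ab h) \<bullet> x \<le> snd (ab h))" for x
    using F(2) memh by simp
  have "cellconst C (indicator (P \<inter> V' C)) (ab ` F)"
    unfolding cellconst_def
  proof (intro conjI ballI impI)
    show "finite (ab ` F)" using F(1) by simp
    show "\<And>x. x \<in> ab ` F \<Longrightarrow> case x of (a, b) \<Rightarrow> a \<noteq> 0"
    proof -
      fix x assume "x \<in> ab ` F"
      then obtain h where h: "h \<in> F" "x = ab h" by blast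
      then show "case x of (a, b) \<Rightarrow> a \<noteq> 0" using conjunct1[OF abh[OF h(1)]] by (simp add: case_prod_beta)
    qed
    fix x y assume xy: "x \<in> V' C" "y \<in> V' C" "\<forall>(a, b)\<in>ab ` F. (a \<bullet> x \<le> b) = (a \<bullet> y \<le> b)"
    have "(fst (ab h) \<bullet> x \<le> snd (ab h)) = (fst (ab h) \<bullet> y \<le> snd (ab h))" if "h \<in> F" for h
    proof -
      have "ab h \<in> ab ` F" using that by blast
      from bspec[OF xy(3) this] show ?thesis by (simp add: case_prod_beta)
    qed
    then have "x \<in> P \<longleftrightarrow> y \<in> P" unfolding memP by blast
    then show "indicator (P \<inter> V' C) x = (indicator (P \<inter> V' C) y :: int)" using xy by (simp add: indicator_def)
  qed
  then show ?case by blast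
next
  case zero
  show ?case by (rule exI[of _ "{}"]) (simp add: cellconst_def)
next
  case (diff f g)
  then obtain A1 A2 where "cellconst C f A1" "cellconst C g A2" by blast
  then have "cellconst C (\<lambda>x. f x - g x) (A1 \<union> A2)" by (rule cellconst_binop)
  then show ?case by blast
next
  case (mult f g)
  then obtain A1 A2 where "cellconst C f A1" "cellconst C g A2" by blast
  then have "cellconst C (\<lambda>x. f x * g x) (A1 \<union> A2)" by (rule cellconst_binop)
  then show ?case by blast
qed

definition transinv :: "'v::euclidean_space set \<Rightarrow> 'v set set \<Rightarrow> bool" where
  "transinv \<Gamma> C \<longleftrightarrow> (\<forall>H\<in>C. \<forall>g\<in>\<Gamma>. (+) g ` H \<in> C) \<and> (\<forall>g\<in>\<Gamma>. - g \<in> \<Gamma>)"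

lemma V'_shift:
  assumes "transinv \<Gamma> C" "h \<in> \<Gamma>"
  shows "x + h \<in> V' C \<longleftrightarrow> x \<in> V' C"
proof -
  have "x + h \<in> \<Union>C \<longleftrightarrow> x \<in> \<Union>C"
  proof
    assume "x + h \<in> \<Union>C"
    then obtain H where H: "H \<in> C" "x + h \<in> H" by auto
    have "-h \<in> \<Gamma>" using assms unfolding transinv_def by blast
    then have "(+) (-h) ` H \<in> C" using assms H(1) unfolding transinv_def by blast
    moreover have "x \<in> (+) (-h) ` H" using H(2) by (force intro: image_eqI[of _ _ "x + h"])
    ultimately show "x \<in> \<Union>C" by auto
  next
    assume "x \<in> \<Union>C"
    then obtain H where H: "H \<in> C" "x \<in> H" by auto
    then have "(+) h ` H \<in> C" using assms unfolding transinv_def by auto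
    moreover have "x + h \<in> (+) h ` H" using H(2) by (force simp: add.commute)
    ultimately show "x + h \<in> \<Union>C" by auto
  qed
  then show ?thesis unfolding V'_def by auto
qed

lemma C_tope_translation:
  assumes "transinv \<Gamma> C" "h \<in> \<Gamma>" "C_tope C P"
  shows "C_tope C ((+) h ` P)"
  unfolding C_tope_def
proof (intro conjI allI impI)
  show "polytope ((+) h ` P)" using assms(3) unfolding C_tope_def by (simp add: polytope_translation_eq)
  show "compact ((+) h ` P)" using assms(3) unfolding C_tope_def by (simp add: compact_translation)
  show "closure (interior ((+) h ` P)) = (+) h ` P"
    using assms(3) unfolding C_tope_def by (simp add: interior_translation closure_translation)
  fix F assume F: "F facet_of (+) h ` P"
  have eq: "(+) (-h) ` (+) h ` P = P" by (auto simp: image_image)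
  have "(+) (-h) ` F face_of (+) (-h) ` (+) h ` P" using F face_of_translation_eq unfolding facet_of_def by blast
  moreover have "(+) (-h) ` F \<noteq> {}" using F unfolding facet_of_def by blast
  moreover have "aff_dim ((+) (-h) ` F) = aff_dim P - 1"
    using F unfolding facet_of_def aff_dim_translation_eq by (simp add: aff_dim_translation_eq)
  ultimately have "(+) (-h) ` F facet_of P" unfolding facet_of_def eq by blast
  then obtain H where H: "H \<in> C" "(+) (-h) ` F \<subseteq> H" using assms(3) unfolding C_tope_def by blast
  have "(+) h ` H \<in> C" using H(1) assms(1,2) unfolding transinv_def by blast
  moreover have "F \<subseteq> (+) h ` H"
  proof
    fix x assume "x \<in> F"
    then have "-h + x \<in> H" using H(2) by auto
    then show "x \<in> (+) h ` H" by (force intro: image_eqI[of _ _ "-h + x"])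
  qed
  ultimately show "\<exists>H\<in>C. F \<subseteq> H" by blast
qed

lemma CV_translate:
  assumes "transinv \<Gamma> C" "h \<in> \<Gamma>" "f \<in> CV C"
  shows "translate_fun h f \<in> CV C"
  using assms(3)
proof (induction rule: CV.induct)
  case (gen P)
  have "translate_fun h (indicator (P \<inter> V' C)) = indicator ((+) h ` P \<inter> V' C)"
  proof
    fix x
    have "x - h \<in> V' C \<longleftrightarrow> x \<in> V' C" using V'_shift[OF assms(1,2), of "x - h"] by simp
    moreover have "x - h \<in> P \<longleftrightarrow> x \<in> (+) h ` P" by (force intro: image_eqI[of _ _ "x - h"])
    ultimately show "translate_fun h (indicator (P \<inter> V' C)) x = (indicator ((+) h ` P \<inter> V' C) x :: int)"
      unfolding translate_fun_def by (simp add: indicator_def)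
  qed
  then show ?case using CV.gen[OF C_tope_translation[OF assms(1,2) gen]] by simp
next
  case zero
  show ?case by (simp add: translate_fun_def CV.zero)
next
  case (diff f g)
  then show ?case using CV.diff[OF diff.IH] unfolding translate_fun_def by simp
next
  case (mult f g)
  then show ?case using CV.mult[OF mult.IH] unfolding translate_fun_def by simp
qed

lemma CV_add: "f \<in> CV C \<Longrightarrow> g \<in> CV C \<Longrightarrow> (\<lambda>x. f x + g x) \<in> CV C"
proof -
  assume "f \<in> CV C" "g \<in> CV C"
  then have "(\<lambda>x. f x - ((\<lambda>x. 0) x - g x)) \<in> CV C" by (intro CV.diff CV.zero)
  then show ?thesis by simp
qed

lemma CV_neg: "f \<in> CV C \<Longrightarrow> (\<lambda>x. - f x) \<in> CV C"
  using CV.diff[OF CV.zero, of f C] by simp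

lemma CV_group_comm: "comm_group (CV_group C)"
proof (rule comm_groupI)
  show "\<And>x y. x \<in> carrier (CV_group C) \<Longrightarrow> y \<in> carrier (CV_group C) \<Longrightarrow> x \<otimes>\<^bsub>CV_group C\<^esub> y \<in> carrier (CV_group C)"
    unfolding CV_group_def by (simp add: CV_add)
  show "\<one>\<^bsub>CV_group C\<^esub> \<in> carrier (CV_group C)" unfolding CV_group_def by (simp add: CV.zero)
  show "\<And>x y z. x \<in> carrier (CV_group C) \<Longrightarrow> y \<in> carrier (CV_group C) \<Longrightarrow> z \<in> carrier (CV_group C) \<Longrightarrow>
        x \<otimes>\<^bsub>CV_group C\<^esub> y \<otimes>\<^bsub>CV_group C\<^esub> z = x \<otimes>\<^bsub>CV_group C\<^esub> (y \<otimes>\<^bsub>CV_group C\<^esub> z)"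
    unfolding CV_group_def by (simp add: add.assoc)
  show "\<And>x y. x \<in> carrier (CV_group C) \<Longrightarrow> y \<in> carrier (CV_group C) \<Longrightarrow> x \<otimes>\<^bsub>CV_group C\<^esub> y = y \<otimes>\<^bsub>CV_group C\<^esub> x"
    unfolding CV_group_def by (simp add: add.commute)
  show "\<And>x. x \<in> carrier (CV_group C) \<Longrightarrow> \<one>\<^bsub>CV_group C\<^esub> \<otimes>\<^bsub>CV_group C\<^esub> x = x"
    unfolding CV_group_def by simp
  show "\<And>x. x \<in> carrier (CV_group C) \<Longrightarrow> \<exists>y\<in>carrier (CV_group C). y \<otimes>\<^bsub>CV_group C\<^esub> x = \<one>\<^bsub>CV_group C\<^esub>"
    unfolding CV_group_def by (auto intro!: bexI[of _ "\<lambda>x. - _ x"] CV_neg)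
qed

definition dir :: "'v::real_vector set \<Rightarrow> 'v set" where
  "dir \<theta> = {x - y | x y. x \<in> \<theta> \<and> y \<in> \<theta>}"

definition adapted :: "'v::euclidean_space set list \<Rightarrow> (nat \<Rightarrow> 'v) \<Rightarrow> bool" where
  "adapted ds u \<longleftrightarrow> (\<forall>k<DIM('v). u k \<in> (if Suc k < DIM('v) then ds ! Suc k else UNIV) \<and> u k \<notin> ds ! k)"

definition sysd :: "'v::euclidean_space set list \<Rightarrow> (nat \<Rightarrow> 'v) \<times> (nat \<Rightarrow> 'v)" where
  "sysd ds = (if \<exists>u w. biorth u w \<and> adapted ds u then SOME (u,w). biorth u w \<and> adapted ds u
              else SOME (u,w). biorth u w)"

definition sysf :: "'v::euclidean_space set list \<Rightarrow> (nat \<Rightarrow> 'v) \<times> (nat \<Rightarrow> 'v)" where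
  "sysf fl = sysd (map dir fl)"

definition pt :: "'v set list \<Rightarrow> 'v" where
  "pt fl = the_elem (fl ! 0)"

definition delta :: "'v::euclidean_space set set \<Rightarrow> ('v \<Rightarrow> int) \<Rightarrow> 'v set list \<Rightarrow> int" where
  "delta C f fl = (\<Sum>s\<in>Pow {..<DIM('v)}. germ C f (pt fl) (snd (sysf fl)) s)"

lemma ex_biorth: "\<exists>u w. biorth u (w :: nat \<Rightarrow> 'v::euclidean_space)"
proof -
  obtain e where e': "bij_betw e {..<DIM('v)} (Basis :: 'v set)"
    using ex_bij_betw_nat_finite[OF finite_Basis[where 'a='v]] by (metis atLeast0LessThan)
  have inner: "e i \<bullet> e k = (if i = k then 1 else 0)" if "i < DIM('v)" "k < DIM('v)" for i k
  proof -
    have "e i \<in> Basis" "e k \<in> Basis" using e' that bij_betwE by fastforce+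
    moreover have "e i = e k \<longleftrightarrow> i = k" using e' that unfolding bij_betw_def inj_on_def by auto
    ultimately show ?thesis by (simp add: inner_Basis)
  qed
  have rep: "x = (\<Sum>k<DIM('v). (e k \<bullet> x) *\<^sub>R e k)" for x
  proof -
    have "(\<Sum>k<DIM('v). (e k \<bullet> x) *\<^sub>R e k) = (\<Sum>b\<in>Basis. (b \<bullet> x) *\<^sub>R b)"
      using sum.reindex_bij_betw[OF e', of "\<lambda>b. (b \<bullet> x) *\<^sub>R b"] by simp
    also have "\<dots> = x" using euclidean_representation[of x] by (simp add: inner_commute)
    finally show ?thesis by simp
  qed
  have "biorth e e" unfolding biorth_def using inner rep by blast
  then show ?thesis by blast
qed

lemma sysd_biorth: "biorth (fst (sysd ds)) (snd (sysd (ds :: 'v::euclidean_space set list)))"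
proof (cases "\<exists>u w. biorth u w \<and> adapted ds u")
  case True
  then have "\<exists>p. (\<lambda>(u,w). biorth u w \<and> adapted ds u) p" by auto
  then have "(\<lambda>(u,w). biorth u w \<and> adapted ds u) (SOME (u,w). biorth u w \<and> adapted ds u)" by (rule someI_ex)
  then show ?thesis unfolding sysd_def if_P[OF True] by (simp add: case_prod_beta)
next
  case False
  have "\<exists>p. (\<lambda>(u,w). biorth u (w :: nat \<Rightarrow> 'v)) p" using ex_biorth by auto
  then have "(\<lambda>(u,w). biorth u (w :: nat \<Rightarrow> 'v)) (SOME (u,w). biorth u w)" by (rule someI_ex)
  then show ?thesis unfolding sysd_def if_not_P[OF False] by (simp add: case_prod_beta)
qed

lemma sysd_adapted:
  assumes "biorth u w" "adapted ds u"
  shows "adapted ds (fst (sysd (ds :: 'v::euclidean_space set list)))"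
proof -
  have True: "\<exists>u w. biorth u (w :: nat \<Rightarrow> 'v) \<and> adapted ds u" using assms by blast
  then have "\<exists>p. (\<lambda>(u,w). biorth u w \<and> adapted ds u) p" by auto
  then have "(\<lambda>(u,w). biorth u w \<and> adapted ds u) (SOME (u,w). biorth u w \<and> adapted ds u)" by (rule someI_ex)
  then show ?thesis unfolding sysd_def if_P[OF True] by (simp add: case_prod_beta)
qed

lemma sysf_biorth: "biorth (fst (sysf fl)) (snd (sysf (fl :: 'v::euclidean_space set list)))"
  unfolding sysf_def by (rule sysd_biorth)

lemma dir_translate: "dir ((+) g ` \<theta>) = dir \<theta>"
  unfolding dir_def by (auto; metis add_diff_cancel_left image_eqI)

lemma sysf_translate: "sysf (translate_flag g fl) = sysf fl"
  unfolding sysf_def translate_flag_def by (simp add: comp_def dir_translate)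

lemma translate_flag_comp: "translate_flag g (translate_flag h fl) = translate_flag (g + h) fl"
  unfolding translate_flag_def by (simp add: image_image add.assoc comp_def)

lemma translate_flag_0: "translate_flag 0 fl = fl"
  unfolding translate_flag_def by (rule map_idI) simp

lemma length_translate_flag[simp]: "length (translate_flag g fl) = length fl"
  unfolding translate_flag_def by simp

lemma nth_translate_flag: "j < length fl \<Longrightarrow> translate_flag g fl ! j = (+) g ` (fl ! j)"
  unfolding translate_flag_def by simp

lemma singular_flag_0:
  assumes "fl \<in> singular_flags C"
  shows "fl ! 0 = {pt fl}"
proof -
  have "fl ! 0 \<in> C_k C 0" using assms unfolding singular_flags_def by auto
  then have "aff_dim (fl ! 0) = 0" unfolding C_k_def by auto
  then obtain a where "fl ! 0 = {a}" using aff_dim_eq_0 by blast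
  then show ?thesis unfolding pt_def by simp
qed

lemma pt_translate:
  assumes "fl \<in> singular_flags (C :: 'v::euclidean_space set set)"
  shows "pt (translate_flag g fl) = g + pt fl"
proof -
  have "length fl = DIM('v)" using assms unfolding singular_flags_def by auto
  then have "translate_flag g fl ! 0 = (+) g ` (fl ! 0)" by (simp add: nth_translate_flag)
  also have "\<dots> = {g + pt fl}" using singular_flag_0[OF assms] by simp
  finally show ?thesis by (simp add: pt_def)
qed

lemma singular_flag_chain:
  assumes "fl \<in> singular_flags (C :: 'v::euclidean_space set set)"
  shows "j < DIM('v) \<Longrightarrow> fl ! 0 \<subseteq> fl ! j"
proof (induction j)
  case 0
  then show ?case by simp
next
  case (Suc j)
  then show ?case using assms unfolding singular_flags_def by force
qed

lemma hyp_translate: "(+) g ` {x. a \<bullet> x = b} = {y. a \<bullet> y = b + a \<bullet> (g::'v::real_inner)}"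
proof
  show "(+) g ` {x. a \<bullet> x = b} \<subseteq> {y. a \<bullet> y = b + a \<bullet> g}" by (auto simp: inner_add_right)
  show "{y. a \<bullet> y = b + a \<bullet> g} \<subseteq> (+) g ` {x. a \<bullet> x = b}"
  proof
    fix y assume "y \<in> {y. a \<bullet> y = b + a \<bullet> g}"
    then show "y \<in> (+) g ` {x. a \<bullet> x = b}" by (intro image_eqI[of _ _ "y - g"]) (auto simp: inner_diff_right)
  qed
qed

locale setting =
  fixes \<Gamma> :: "'v::euclidean_space set" and C :: "'v set set" and B :: "'v set"
  assumes gC: "goodC C" and ti: "transinv \<Gamma> C" and GB: "\<Gamma> = int_span B" and fB: "finite B"
    and iB: "int_independent B"
    and orbits: "\<exists>S. finite S \<and> S \<subseteq> C \<and> C = {(+) g ` H | g H. g \<in> \<Gamma> \<and> H \<in> S}"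
begin

lemma G_add: "x \<in> \<Gamma> \<Longrightarrow> y \<in> \<Gamma> \<Longrightarrow> x + y \<in> \<Gamma>"
  using int_span_add GB by blast

lemma G_neg: "x \<in> \<Gamma> \<Longrightarrow> - x \<in> \<Gamma>"
  using ti unfolding transinv_def by blast

lemma G_diff: "x \<in> \<Gamma> \<Longrightarrow> y \<in> \<Gamma> \<Longrightarrow> x - y \<in> \<Gamma>"
proof -
  assume "x \<in> \<Gamma>" "y \<in> \<Gamma>"
  then have "x + (- y) \<in> \<Gamma>" using G_add G_neg by blast
  then show ?thesis by (metis diff_conv_add_uminus)
qed

lemma G_addclosed: "addclosed \<Gamma>"
  unfolding GB by (rule addclosed_int_span)

lemma hasg_shift:
  assumes "hasg C f p w s c" "h \<in> \<Gamma>"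
  shows "hasg C (translate_fun h f) (h + p) w s c"
proof -
  obtain d where d: "d > 0" "\<forall>x\<in>Sreg p w s d \<inter> V' C. f x = c" using assms(1) unfolding hasg_def by auto
  have "translate_fun h f x = c" if "x \<in> Sreg (h + p) w s d \<inter> V' C" for x
  proof -
    have "x - h \<in> Sreg p w s d" using that unfolding Sreg_def mem_Collect_eq Int_iff diff_diff_eq by blast
    moreover have "x - h \<in> V' C" using that V'_shift[OF ti assms(2), of "x - h"] by simp
    ultimately show ?thesis using d unfolding translate_fun_def by auto
  qed
  then show ?thesis unfolding hasg_def using d(1) by blast
qed

lemma CV_cc: "f \<in> CV C \<Longrightarrow> \<exists>A. cellconst C f A" by (rule CV_cellconst)

lemma germ_shift:
  assumes "f \<in> CV C" "biorth u w" "h \<in> \<Gamma>"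
  shows "germ C (translate_fun h f) (h + p) w s = germ C f p w s"
proof -
  obtain A where "cellconst C f A" using CV_cc assms(1) by blast
  then have "hasg C f p w s (germ C f p w s)" using cellconst_hasg[OF gC assms(2)] by blast
  then have "hasg C (translate_fun h f) (h + p) w s (germ C f p w s)" using hasg_shift assms(3) by blast
  then show ?thesis by (rule germ_eq[OF gC assms(2)])
qed

lemma germ_binop:
  assumes "f \<in> CV C" "g \<in> CV C" "biorth u w"
  shows "germ C (\<lambda>x. F (f x) (g x)) p w s = F (germ C f p w s) (germ C g p w s)"
proof -
  obtain A1 A2 where "cellconst C f A1" "cellconst C g A2" using CV_cc assms by blast
  then have "hasg C f p w s (germ C f p w s)" "hasg C g p w s (germ C g p w s)"
    using cellconst_hasg[OF gC assms(3)] by blast+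
  from hasg_binop[OF this] show ?thesis by (rule germ_eq[OF gC assms(3)])
qed

lemma delta_add:
  assumes "f \<in> CV C" "g \<in> CV C"
  shows "delta C (\<lambda>x. f x + g x) fl = delta C f fl + delta C g fl"
  unfolding delta_def using germ_binop[OF assms sysf_biorth, where F="(+)"] by (simp add: sum.distrib)

lemma delta_diff:
  assumes "f \<in> CV C" "g \<in> CV C"
  shows "delta C (\<lambda>x. f x - g x) fl = delta C f fl - delta C g fl"
  unfolding delta_def using germ_binop[OF assms sysf_biorth, where F="(-)"] by (simp add: sum_subtractf)

lemma delta_translate:
  assumes "f \<in> CV C" "h \<in> \<Gamma>" "fl \<in> singular_flags C"
  shows "delta C (translate_fun h f) (translate_flag g fl) = delta C f (translate_flag (g - h) fl)"
proof -
  have "pt (translate_flag g fl) = h + pt (translate_flag (g - h) fl)"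
    using pt_translate[OF assms(3)] by simp
  then show ?thesis unfolding delta_def sysf_translate
    using germ_shift[OF assms(1) sysf_biorth assms(2)] by simp
qed

definition rep :: "'v set list set \<Rightarrow> 'v set list" where
  "rep J = (SOME fl. fl \<in> singular_flags C \<and> flag_orbit \<Gamma> fl = J)"

lemma rep_props:
  assumes "J \<in> flag_orbits \<Gamma> C"
  shows "rep J \<in> singular_flags C" "flag_orbit \<Gamma> (rep J) = J"
proof -
  have "\<exists>fl. fl \<in> singular_flags C \<and> flag_orbit \<Gamma> fl = J" using assms unfolding flag_orbits_def by auto
  then have "rep J \<in> singular_flags C \<and> flag_orbit \<Gamma> (rep J) = J" unfolding rep_def by (rule someI_ex)
  then show "rep J \<in> singular_flags C" "flag_orbit \<Gamma> (rep J) = J" by auto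
qed

definition Dset :: "'v set list set \<Rightarrow> ('v \<Rightarrow> int) \<Rightarrow> 'v set" where
  "Dset J f = {g \<in> \<Gamma>. odd (delta C f (translate_flag g (rep J)))}"

definition MJ :: "'v set list set \<Rightarrow> 'v set set" where
  "MJ J = {Dset J f | f. f \<in> CV C}"

definition Xi :: "('v \<Rightarrow> int) \<Rightarrow> 'v set list set \<Rightarrow> int" where
  "Xi f = (\<lambda>J\<in>flag_orbits \<Gamma> C. valM \<Gamma> (MJ J) (Dset J f))"

lemma delta_odd_vertex:
  assumes "f \<in> CV C" "cellconst C f A" "odd (delta C f fl)"
  shows "pt fl \<in> Vert A"
  using odd_vertex[OF gC sysf_biorth assms(2)] assms(3) unfolding delta_def by blast

lemma Dset_finite:
  assumes "J \<in> flag_orbits \<Gamma> C" "f \<in> CV C"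
  shows "finite (Dset J f)"
proof -
  obtain A where A: "cellconst C f A" using CV_cc assms(2) by blast
  have "Dset J f \<subseteq> (\<lambda>g. g + pt (rep J)) -` Vert A"
  proof
    fix g assume "g \<in> Dset J f"
    then have "pt (translate_flag g (rep J)) \<in> Vert A"
      using delta_odd_vertex[OF assms(2) A] unfolding Dset_def by blast
    then show "g \<in> (\<lambda>g. g + pt (rep J)) -` Vert A"
      using pt_translate[OF rep_props(1)[OF assms(1)]] by simp
  qed
  moreover have "finite ((\<lambda>g. g + pt (rep J)) -` Vert A)"
    using A unfolding cellconst_def by (intro finite_vimageI finite_Vert) (auto simp: inj_def)
  ultimately show ?thesis by (rule finite_subset)
qed

lemma MJ_props: "J \<in> flag_orbits \<Gamma> C \<Longrightarrow> D' \<in> MJ J \<Longrightarrow> D' \<subseteq> \<Gamma> \<and> finite D'"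
  unfolding MJ_def using Dset_finite by (auto simp: Dset_def)

lemma Dset_add:
  assumes "f \<in> CV C" "g \<in> CV C"
  shows "Dset J (\<lambda>x. f x + g x) = (Dset J f - Dset J g) \<union> (Dset J g - Dset J f)"
  unfolding Dset_def using delta_add[OF assms] by auto

lemma Dset_diff:
  assumes "f \<in> CV C" "g \<in> CV C"
  shows "Dset J (\<lambda>x. f x - g x) = (Dset J f - Dset J g) \<union> (Dset J g - Dset J f)"
  unfolding Dset_def using delta_diff[OF assms] by auto

lemma Dset_translate:
  assumes "J \<in> flag_orbits \<Gamma> C" "f \<in> CV C" "h \<in> \<Gamma>"
  shows "Dset J (translate_fun h f) = (+) h ` Dset J f"
proof -
  have "Dset J (translate_fun h f) = {g \<in> \<Gamma>. odd (delta C f (translate_flag (g - h) (rep J)))}"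
    unfolding Dset_def using delta_translate[OF assms(2,3) rep_props(1)[OF assms(1)]] by simp
  also have "\<dots> = (+) h ` Dset J f"
  proof
    show "{g \<in> \<Gamma>. odd (delta C f (translate_flag (g - h) (rep J)))} \<subseteq> (+) h ` Dset J f"
    proof
      fix g assume g: "g \<in> {g \<in> \<Gamma>. odd (delta C f (translate_flag (g - h) (rep J)))}"
      then have "g - h \<in> Dset J f" unfolding Dset_def using G_diff assms(3) by blast
      then show "g \<in> (+) h ` Dset J f" by (intro image_eqI[of _ _ "g - h"]) auto
    qed
    show "(+) h ` Dset J f \<subseteq> {g \<in> \<Gamma>. odd (delta C f (translate_flag (g - h) (rep J)))}"
    proof
      fix g' assume "g' \<in> (+) h ` Dset J f"
      then obtain g where g: "g \<in> Dset J f" "g' = h + g" by blast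
      then have "g' \<in> \<Gamma>" using G_add assms(3) unfolding Dset_def by blast
      moreover have "g' - h = g" using g by simp
      ultimately show "g' \<in> {g \<in> \<Gamma>. odd (delta C f (translate_flag (g - h) (rep J)))}"
        using g(1) unfolding Dset_def by simp
    qed
  qed
  finally show ?thesis .
qed

lemma Xi_generator:
  assumes "J \<in> flag_orbits \<Gamma> C" "f \<in> CV C" "h \<in> \<Gamma>"
  shows "valM \<Gamma> (MJ J) (Dset J (\<lambda>x. f x - translate_fun h f x)) = 0"
proof -
  have tf: "translate_fun h f \<in> CV C" using CV_translate[OF ti assms(3,2)] .
  have "Dset J (\<lambda>x. f x - translate_fun h f x) = (Dset J f - (+) h ` Dset J f) \<union> ((+) h ` Dset J f - Dset J f)"
    using Dset_diff[OF assms(2) tf] Dset_translate[OF assms] by simp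
  moreover have "Dset J f \<in> MJ J" unfolding MJ_def using assms(2) by blast
  ultimately show ?thesis
    using valM_shift[OF G_addclosed MJ_props[OF assms(1)] _ assms(3)] by simp
qed

end

lemma translate_Inter:
  assumes "F \<noteq> {}"
  shows "(+) (g::'a::ab_group_add) ` \<Inter>F = \<Inter>((\<lambda>H. (+) g ` H) ` F)"
proof safe
  fix y assume y: "y \<in> \<Inter>((\<lambda>H. (+) g ` H) ` F)"
  have "y - g \<in> \<Inter>F"
  proof
    fix H assume "H \<in> F"
    then have "y \<in> (+) g ` H" using y by auto
    then show "y - g \<in> H" by auto
  qed
  then show "y \<in> (+) g ` \<Inter>F" by (intro image_eqI[of _ _ "y - g"]) auto
qed (use assms in auto)

context setting
begin

lemma Cp_finite: "finite {H \<in> C. q \<in> H}"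
proof -
  obtain S where S: "finite S" "S \<subseteq> C" "C = {(+) g ` H | g H. g \<in> \<Gamma> \<and> H \<in> S}" using orbits by blast
  define tr where "tr H = (+) (SOME g. g \<in> \<Gamma> \<and> q \<in> (+) g ` H) ` H" for H
  have "{H \<in> C. q \<in> H} \<subseteq> tr ` S"
  proof
    fix H' assume H': "H' \<in> {H \<in> C. q \<in> H}"
    then obtain g H where gH: "g \<in> \<Gamma>" "H \<in> S" "H' = (+) g ` H" using S(3) by auto
    define g' where "g' = (SOME g. g \<in> \<Gamma> \<and> q \<in> (+) g ` H)"
    have "g' \<in> \<Gamma> \<and> q \<in> (+) g' ` H" unfolding g'_def by (rule someI[of _ g]) (use gH H' in auto)
    moreover obtain a b where ab: "a \<noteq> 0" "H = {x. a \<bullet> x = b}"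
      using gH(2) S(2) gC unfolding goodC_def affine_hyperplane_def by blast
    ultimately have "a \<bullet> q = b + a \<bullet> g'" using hyp_translate by blast
    moreover have "a \<bullet> q = b + a \<bullet> g" using H' gH ab hyp_translate by blast
    ultimately have "(+) g ` H = (+) g' ` H" using ab by (simp add: hyp_translate)
    then show "H' \<in> tr ` S" using gH unfolding tr_def g'_def by auto
  qed
  then show ?thesis using S(1) finite_subset by blast
qed

lemma flag_orbit_translate:
  assumes "g \<in> \<Gamma>"
  shows "flag_orbit \<Gamma> (translate_flag g fl) = flag_orbit \<Gamma> fl"
  unfolding flag_orbit_def
proof safe
  fix h assume "h \<in> \<Gamma>"
  then show "\<exists>h'. translate_flag h (translate_flag g fl) = translate_flag h' fl \<and> h' \<in> \<Gamma>"
    using assms G_add by (auto simp: translate_flag_comp)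
next
  fix h assume h: "h \<in> \<Gamma>"
  have "translate_flag h fl = translate_flag (h - g) (translate_flag g fl)" by (simp add: translate_flag_comp)
  then show "\<exists>h'. translate_flag h fl = translate_flag h' (translate_flag g fl) \<and> h' \<in> \<Gamma>"
    using G_diff[OF h assms] by blast
qed

lemma valM_empty: "valM G M {} = 0"
  unfolding valM_def oddsum_def by simp

lemma Xi_support:
  assumes "f \<in> CV C"
  shows "finite {J \<in> flag_orbits \<Gamma> C. Xi f J \<noteq> 0}"
proof -
  obtain A where A: "cellconst C f A" using CV_cc assms by blast
  define L where "L = (\<Union>q\<in>Vert A. {fl. set fl \<subseteq> Inter ` Pow {H \<in> C. q \<in> H} \<and> length fl = DIM('v)})"
  have finL: "finite L" unfolding L_def
    using A Cp_finite unfolding cellconst_def by (intro finite_UN_I finite_Vert finite_lists_length_eq) auto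
  have "{J \<in> flag_orbits \<Gamma> C. Xi f J \<noteq> 0} \<subseteq> flag_orbit \<Gamma> ` L"
  proof
    fix J assume J: "J \<in> {J \<in> flag_orbits \<Gamma> C. Xi f J \<noteq> 0}"
    then have "Dset J f \<noteq> {}" unfolding Xi_def using valM_empty by force
    then obtain g where g: "g \<in> \<Gamma>" "odd (delta C f (translate_flag g (rep J)))" unfolding Dset_def by auto
    have rp: "rep J \<in> singular_flags C" "flag_orbit \<Gamma> (rep J) = J" using rep_props J by auto
    define fl' where "fl' = translate_flag g (rep J)"
    define q where "q = pt fl'"
    have q: "q \<in> Vert A" unfolding q_def fl'_def using delta_odd_vertex[OF assms A g(2)] .
    have qeq: "q = g + pt (rep J)" unfolding q_def fl'_def using pt_translate[OF rp(1)] .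
    have len: "length (rep J) = DIM('v)" using rp(1) unfolding singular_flags_def by auto
    have "set fl' \<subseteq> Inter ` Pow {H \<in> C. q \<in> H}"
    proof
      fix \<theta>' assume "\<theta>' \<in> set fl'"
      then obtain j where j: "j < DIM('v)" "\<theta>' = fl' ! j" unfolding fl'_def by (auto simp: in_set_conv_nth len)
      then have th': "\<theta>' = (+) g ` (rep J ! j)" unfolding fl'_def by (simp add: nth_translate_flag len)
      have "rep J ! j \<in> C_k C j" using rp(1) j unfolding singular_flags_def by auto
      then obtain F where F: "F \<subseteq> C" "F \<noteq> {}" "rep J ! j = \<Inter>F" unfolding C_k_def by auto
      have ptin: "pt (rep J) \<in> rep J ! j" using singular_flag_chain[OF rp(1) j(1)] singular_flag_0[OF rp(1)] by auto
      have "\<theta>' = \<Inter>((\<lambda>H. (+) g ` H) ` F)" using th' F(3) translate_Inter[OF F(2)] by simp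
      moreover have "(\<lambda>H. (+) g ` H) ` F \<subseteq> {H \<in> C. q \<in> H}"
      proof
        fix H' assume "H' \<in> (\<lambda>H. (+) g ` H) ` F"
        then obtain H where H: "H \<in> F" "H' = (+) g ` H" by auto
        have "H' \<in> C" using H F(1) ti g(1) unfolding transinv_def by auto
        moreover have "q \<in> H'" using H ptin F(3) qeq by auto
        ultimately show "H' \<in> {H \<in> C. q \<in> H}" by simp
      qed
      ultimately show "\<theta>' \<in> Inter ` Pow {H \<in> C. q \<in> H}" by blast
    qed
    then have "fl' \<in> L" unfolding L_def using q len unfolding fl'_def by auto
    moreover have "J = flag_orbit \<Gamma> fl'" unfolding fl'_def using flag_orbit_translate[OF g(1)] rp(2) by simp
    ultimately show "J \<in> flag_orbit \<Gamma> ` L" by blast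
  qed
  then show ?thesis using finL finite_subset by blast
qed

end

lemma facet_in_hyperplane:
  assumes x0: "x0 \<in> rel_interior Fc" and sub: "Fc \<subseteq> {x. \<alpha> \<bullet> x \<le> \<beta>}" and eq: "\<alpha> \<bullet> x0 = \<beta>"
  shows "Fc \<subseteq> {x. \<alpha> \<bullet> x = (\<beta>::real)}"
proof
  fix y assume y: "y \<in> Fc"
  obtain e where e: "e > 0" "cball x0 e \<inter> affine hull Fc \<subseteq> Fc"
    using x0 unfolding mem_rel_interior_cball by blast
  have x0F: "x0 \<in> Fc" using x0 rel_interior_subset by blast
  show "y \<in> {x. \<alpha> \<bullet> x = \<beta>}"
  proof (cases "y = x0")
    case True
    then show ?thesis using eq by simp
  next
    case False
    define t where "t = e / norm (x0 - y)"
    have t0: "t > 0" unfolding t_def using e False by simp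
    define z where "z = (1 + t) *\<^sub>R x0 + (- t) *\<^sub>R y"
    have "z \<in> affine hull Fc"
      unfolding z_def by (rule mem_affine[OF affine_affine_hull]) (auto intro: hull_inc x0F y)
    moreover have "dist x0 z \<le> e"
    proof -
      have "x0 - z = t *\<^sub>R (y - x0)" unfolding z_def by (simp add: algebra_simps)
      then have "dist x0 z = t * norm (y - x0)" using t0 by (simp add: dist_norm)
      also have "\<dots> = e" unfolding t_def using False by (simp add: norm_minus_commute)
      finally show ?thesis by simp
    qed
    ultimately have "z \<in> Fc" using e(2) by auto
    then have "\<alpha> \<bullet> z \<le> \<beta>" using sub by auto
    then have "(1 + t) * \<beta> - t * (\<alpha> \<bullet> y) \<le> \<beta>" unfolding z_def using eq
      by (simp add: inner_add_right inner_diff_right)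
    then have "t * \<beta> \<le> t * (\<alpha> \<bullet> y)" by (simp add: algebra_simps)
    then have "\<beta> \<le> \<alpha> \<bullet> y" using t0 by simp
    moreover have "\<alpha> \<bullet> y \<le> \<beta>" using sub y by auto
    ultimately show ?thesis by simp
  qed
qed

lemma tope_box:
  fixes a u :: "nat \<Rightarrow> 'v::euclidean_space"
  assumes bi: "biorth u a" and c: "\<And>i. i < DIM('v) \<Longrightarrow> c i > 0"
    and lowC: "\<And>i. i < DIM('v) \<Longrightarrow> {x. a i \<bullet> x = a i \<bullet> v} \<in> C"
    and upC: "\<And>i. i < DIM('v) \<Longrightarrow> {x. a i \<bullet> x = a i \<bullet> v + c i} \<in> C"
  shows "C_tope C {x. \<forall>i<DIM('v). a i \<bullet> v \<le> a i \<bullet> x \<and> a i \<bullet> x \<le> a i \<bullet> v + c i}"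
proof -
  define T where "T = {x. \<forall>i<DIM('v). a i \<bullet> v \<le> a i \<bullet> x \<and> a i \<bullet> x \<le> a i \<bullet> v + c i}"
  define HS where "HS = (\<lambda>i. {x. (- a i) \<bullet> x \<le> - (a i \<bullet> v)}) ` {..<DIM('v)} \<union> (\<lambda>i. {x. a i \<bullet> x \<le> a i \<bullet> v + c i}) ` {..<DIM('v)}"
  have T_HS: "T = \<Inter>HS" unfolding T_def HS_def by auto
  have poly: "polyhedron T" unfolding T_HS HS_def
    by (intro polyhedron_Inter) (auto intro: polyhedron_halfspace_le polyhedron_halfspace_ge)
  define R where "R = (\<Sum>k<DIM('v). c k * norm (u k))"
  have "T \<subseteq> cball v R"
  proof
    fix x assume x: "x \<in> T"
    have "x - v = (\<Sum>k<DIM('v). (a k \<bullet> (x - v)) *\<^sub>R u k)" by (rule biorth_rep[OF bi])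
    then have "norm (x - v) \<le> (\<Sum>k<DIM('v). norm ((a k \<bullet> (x - v)) *\<^sub>R u k))" by (metis norm_sum)
    also have "\<dots> \<le> R" unfolding R_def
    proof (rule sum_mono)
      fix k assume k: "k \<in> {..<DIM('v)}"
      have "\<bar>a k \<bullet> (x - v)\<bar> \<le> c k" using x k unfolding T_def by (auto simp: inner_diff_right)
      then show "norm ((a k \<bullet> (x - v)) *\<^sub>R u k) \<le> c k * norm (u k)" by (simp add: mult_right_mono)
    qed
    finally show "x \<in> cball v R" by (simp add: dist_norm norm_minus_commute)
  qed
  then have bdd: "bounded T" using bounded_cball bounded_subset by blast
  have ptope: "polytope T" using poly bdd polytope_eq_bounded_polyhedron by blast
  have cpt: "compact T" using ptope polytope_imp_compact by blast
  have cvx: "convex T" using ptope polytope_imp_convex by blast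
  define Oo where "Oo = {x. \<forall>i<DIM('v). a i \<bullet> v < a i \<bullet> x \<and> a i \<bullet> x < a i \<bullet> v + c i}"
  have Oo_T: "Oo \<subseteq> T" unfolding Oo_def T_def by auto
  have openOo: "open Oo"
  proof -
    have "Oo = (\<Inter>i\<in>{..<DIM('v)}. {x. a i \<bullet> v < a i \<bullet> x} \<inter> {x. a i \<bullet> x < a i \<bullet> v + c i})"
      unfolding Oo_def by auto
    also have "open \<dots>"
      by (intro open_INT finite_lessThan ballI open_Int open_Collect_less continuous_intros)
    finally show ?thesis .
  qed
  have "v + (\<Sum>k<DIM('v). (c k / 2) *\<^sub>R u k) \<in> Oo"
    unfolding Oo_def using biorth_coord[OF bi] c by (auto simp: inner_add_right)
  then have Oone: "Oo \<noteq> {}" by auto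
  have OointT: "Oo \<subseteq> interior T" using interior_maximal[OF Oo_T openOo] .
  then have intne: "interior T \<noteq> {}" using Oone by auto
  have clT: "closure (interior T) = T"
    using convex_closure_interior[OF cvx intne] cpt by (simp add: compact_imp_closed closure_closed)
  have facets: "\<exists>H\<in>C. Fc \<subseteq> H" if Fc: "Fc facet_of T" for Fc
  proof -
    have face: "Fc face_of T" "Fc \<noteq> {}" and ad: "aff_dim Fc = aff_dim T - 1" using Fc unfolding facet_of_def by auto
    have "Fc \<noteq> T" using ad by auto
    then have "Fc \<subseteq> rel_frontier T" using face_of_subset_rel_frontier face(1) by blast
    have cvF: "convex Fc" using face_of_imp_convex face(1) by blast
    obtain x0 where x0: "x0 \<in> rel_interior Fc" using rel_interior_eq_empty[OF cvF] face(2) by blast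
    have x0F: "x0 \<in> Fc" using x0 rel_interior_subset by blast
    have FT: "Fc \<subseteq> T" using face(1) face_of_imp_subset by blast
    have "x0 \<notin> interior T"
      using \<open>Fc \<subseteq> rel_frontier T\<close> x0F rel_interior_nonempty_interior[OF intne] unfolding rel_frontier_def by auto
    then have "x0 \<notin> Oo" using OointT by auto
    then obtain i where i: "i < DIM('v)" "\<not> (a i \<bullet> v < a i \<bullet> x0 \<and> a i \<bullet> x0 < a i \<bullet> v + c i)" unfolding Oo_def by auto
    have x0T: "a i \<bullet> v \<le> a i \<bullet> x0 \<and> a i \<bullet> x0 \<le> a i \<bullet> v + c i" using x0F FT i(1) unfolding T_def by auto
    show ?thesis
    proof (cases "a i \<bullet> x0 = a i \<bullet> v")
      case True
      have "Fc \<subseteq> {x. (- a i) \<bullet> x = - (a i \<bullet> v)}"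
        by (rule facet_in_hyperplane[OF x0]) (use FT i(1) True in \<open>auto simp: T_def\<close>)
      then have "Fc \<subseteq> {x. a i \<bullet> x = a i \<bullet> v}" by auto
      then show ?thesis using lowC[OF i(1)] by blast
    next
      case False
      then have eqx: "a i \<bullet> x0 = a i \<bullet> v + c i" using i(2) x0T by auto
      have "Fc \<subseteq> {x. a i \<bullet> x = a i \<bullet> v + c i}"
        by (rule facet_in_hyperplane[OF x0]) (use FT i(1) eqx in \<open>auto simp: T_def\<close>)
      then show ?thesis using upC[OF i(1)] by blast
    qed
  qed
  show ?thesis unfolding T_def[symmetric] C_tope_def using ptope cpt clT facets by blast
qed

context setting
begin

lemma point_flag:
  assumes vP: "v \<in> points_P C" and dense: "closure \<Gamma> = UNIV"
  shows "\<exists>fl T. fl \<in> singular_flags C \<and> fl ! 0 = {v} \<and> C_tope C T \<and> odd (delta C (indicator (T \<inter> V' C)) fl)"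
proof -
  obtain F where F: "F \<subseteq> C" "finite F" "card F = DIM('v)" "\<Inter>F = {v}" using vP unfolding points_P_def by blast
  obtain hb where hb: "bij_betw hb {..<DIM('v)} F"
    using ex_bij_betw_nat_finite[OF F(2)] F(3) by (auto simp: atLeast0LessThan)
  have hbF: "hb i \<in> F" if "i < DIM('v)" for i using hb that bij_betwE by blast
  have "\<forall>i. \<exists>ab. i < DIM('v) \<longrightarrow> fst ab \<noteq> 0 \<and> hb i = {x. fst ab \<bullet> x = snd ab}"
  proof
    fix i show "\<exists>ab. i < DIM('v) \<longrightarrow> fst ab \<noteq> 0 \<and> hb i = {x. fst ab \<bullet> x = snd ab}"
    proof (cases "i < DIM('v)")
      case True
      then have "affine_hyperplane (hb i)" using hbF F(1) gC unfolding goodC_def by blast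
      then show ?thesis unfolding affine_hyperplane_def by auto
    qed auto
  qed
  then obtain ab where ab: "\<And>i. i < DIM('v) \<Longrightarrow> fst (ab i) \<noteq> 0 \<and> hb i = {x. fst (ab i) \<bullet> x = snd (ab i)}"
    using choice by metis
  define a where "a i = fst (ab i)" for i
  have vin: "v \<in> hb i" if "i < DIM('v)" for i using F(4) hbF[OF that] by auto
  have hbeq: "hb i = {x. a i \<bullet> x = a i \<bullet> v}" if "i < DIM('v)" for i
    using ab[OF that] vin[OF that] unfolding a_def by auto
  have anz: "a i \<noteq> 0" if "i < DIM('v)" for i using ab[OF that] unfolding a_def by auto
  have Fhb: "F = hb ` {..<DIM('v)}" using hb bij_betw_imp_surj_on by metis
  obtain u0 w0 where bi0: "biorth u0 (w0 :: nat \<Rightarrow> 'v)" using ex_biorth by blast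
  define L where "L x = (\<Sum>i<DIM('v). (a i \<bullet> x) *\<^sub>R u0 i)" for x
  have linL: "linear L" unfolding L_def
    by (auto intro!: linearI simp: inner_add_right scaleR_add_left sum.distrib scaleR_sum_right)
  have coordL: "w0 k \<bullet> L x = a k \<bullet> x" if "k < DIM('v)" for k x
    unfolding L_def using biorth_coord[OF bi0 that] .
  have injL: "inj L"
  proof (rule injI)
    fix x y assume "L x = L y"
    then have eqc: "a k \<bullet> x = a k \<bullet> y" if "k < DIM('v)" for k using coordL[OF that] by metis
    have "v + (x - y) \<in> \<Inter>F"
    proof
      fix H assume "H \<in> F"
      then obtain i where i: "i < DIM('v)" "H = hb i" using Fhb by auto
      show "v + (x - y) \<in> H" using i hbeq eqc by (simp add: inner_add_right inner_diff_right)
    qed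
    then show "x = y" using F(4) by simp
  qed
  have surjL: "surj L" using linear_injective_imp_surjective[OF linL injL] by simp
  define u where "u k = (SOME y. L y = u0 k)" for k
  have Lu: "L (u k) = u0 k" for k unfolding u_def using surjL by (metis (mono_tags) someI_ex surjD)
  have au: "a i \<bullet> u k = (if i = k then 1 else 0)" if "i < DIM('v)" "k < DIM('v)" for i k
    using coordL[OF that(1), of "u k"] Lu biorth_inner[OF bi0 that] by simp
  have bi: "biorth u a"
    unfolding biorth_def
  proof (intro conjI allI impI)
    fix i k assume "i < DIM('v)" "k < DIM('v)"
    then show "a i \<bullet> u k = (if i = k then 1 else 0)" by (rule au)
  next
    fix x
    have "L (\<Sum>k<DIM('v). (a k \<bullet> x) *\<^sub>R u k) = (\<Sum>k<DIM('v). (a k \<bullet> x) *\<^sub>R L (u k))"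
      using linL by (simp add: linear_sum linear_scale)
    also have "\<dots> = (\<Sum>k<DIM('v). (a k \<bullet> x) *\<^sub>R u0 k)" by (simp only: Lu)
    also have "\<dots> = L x" unfolding L_def ..
    finally show "x = (\<Sum>k<DIM('v). (a k \<bullet> x) *\<^sub>R u k)" using injL by (simp add: inj_eq)
  qed
  have inju: "inj_on u {..<DIM('v)}"
  proof (rule inj_onI)
    fix i k assume ik: "i \<in> {..<DIM('v)}" "k \<in> {..<DIM('v)}" "u i = u k"
    then have eq: "a i \<bullet> u i = a i \<bullet> u k" by simp
    have "i < DIM('v)" "k < DIM('v)" using ik by auto
    then have "(1::real) = (if i = k then 1 else 0)" using au[of i i] au[of i k] eq by simp
    then show "i = k" by (auto split: if_splits)
  qed
  define \<theta> where "\<theta> j = {x. \<forall>i. j \<le> i \<and> i < DIM('v) \<longrightarrow> a i \<bullet> x = a i \<bullet> v}" for j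
  define fl where "fl = map \<theta> [0..<DIM('v)]"
  have flnth: "fl ! j = \<theta> j" if "j < DIM('v)" for j unfolding fl_def using that by simp
  have dirth: "dir (\<theta> j) = {z. \<forall>i. j \<le> i \<and> i < DIM('v) \<longrightarrow> a i \<bullet> z = 0}" for j
  proof safe
    fix z i assume "z \<in> dir (\<theta> j)" "j \<le> i" "i < DIM('v)"
    then show "a i \<bullet> z = 0" unfolding dir_def \<theta>_def by (auto simp: inner_diff_right)
  next
    fix z assume z: "\<forall>i. j \<le> i \<and> i < DIM('v) \<longrightarrow> a i \<bullet> z = 0"
    have "v + z \<in> \<theta> j" "v \<in> \<theta> j" unfolding \<theta>_def using z by (auto simp: inner_add_right)
    then show "z \<in> dir (\<theta> j)" unfolding dir_def by (intro CollectI exI[of _ "v + z"] exI[of _ v]) auto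
  qed
  have indep: "independent (u ` {..<j})" if "j \<le> DIM('v)" for j
  proof (rule independent_if_scalars_zero)
    show "finite (u ` {..<j})" by simp
    fix f x assume sum0: "(\<Sum>y\<in>u ` {..<j}. f y *\<^sub>R y) = 0" and x: "x \<in> u ` {..<j}"
    then obtain i where i: "i < j" "x = u i" by auto
    have inj': "inj_on u {..<j}" using inj_on_subset[OF inju, of "{..<j}"] that by auto
    have "0 = a i \<bullet> (\<Sum>y\<in>u ` {..<j}. f y *\<^sub>R y)" using sum0 by simp
    also have "\<dots> = (\<Sum>k<j. f (u k) * (a i \<bullet> u k))"
      by (simp add: inner_sum_right sum.reindex[OF inj'])
    also have "\<dots> = (\<Sum>k<j. if k = i then f (u k) else 0)"
      using au i that by (intro sum.cong) auto
    also have "\<dots> = f x" using i by simp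
    finally show "f x = 0" by simp
  qed
  have thspan: "\<theta> j = (+) v ` span (u ` {..<j})" if "j \<le> DIM('v)" for j
  proof safe
    fix x assume x: "x \<in> \<theta> j"
    have "x - v = (\<Sum>k<DIM('v). (a k \<bullet> (x - v)) *\<^sub>R u k)" by (rule biorth_rep[OF bi])
    also have "\<dots> = (\<Sum>k<j. (a k \<bullet> (x - v)) *\<^sub>R u k)"
      by (rule sum.mono_neutral_right) (use that x in \<open>auto simp: \<theta>_def inner_diff_right\<close>)
    finally have "x - v \<in> span (u ` {..<j})"
      by (metis (no_types, lifting) image_eqI lessThan_iff span_base span_scale span_sum)
    then show "x \<in> (+) v ` span (u ` {..<j})" by (intro image_eqI[of _ _ "x - v"]) auto
  next
    fix y assume y: "y \<in> span (u ` {..<j})"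
    have "span (u ` {..<j}) \<subseteq> {z. a i \<bullet> z = 0}" if "j \<le> i" "i < DIM('v)" for i
      by (rule span_minimal) (use au that \<open>j \<le> DIM('v)\<close> in \<open>auto simp: subspace_hyperplane\<close>)
    then show "v + y \<in> \<theta> j" using y unfolding \<theta>_def by (auto simp: inner_add_right)
  qed
  have affd: "aff_dim (\<theta> j) = int j" if "j \<le> DIM('v)" for j
  proof -
    have "aff_dim (\<theta> j) = aff_dim (span (u ` {..<j}))" using thspan[OF that] by (simp add: aff_dim_translation_eq)
    also have "\<dots> = int (dim (u ` {..<j}))" by (simp add: aff_dim_subspace dim_span)
    also have "\<dots> = int j" using dim_eq_card_independent[OF indep[OF that]]
      card_image[OF inj_on_subset[OF inju, of "{..<j}"]] that by auto
    finally show ?thesis .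
  qed
  have th0: "\<theta> 0 = {v}" using thspan[of 0] by simp
  have thInter: "\<theta> j = \<Inter>(hb ` {j..<DIM('v)})" if "j < DIM('v)" for j
    unfolding \<theta>_def using hbeq by auto
  have flS: "fl \<in> singular_flags C"
    unfolding singular_flags_def
  proof (intro CollectI conjI allI impI)
    show "length fl = DIM('v)" unfolding fl_def by simp
  next
    fix j assume j: "j < DIM('v)"
    have "hb ` {j..<DIM('v)} \<subseteq> C" using hbF F(1) by auto
    moreover have "hb ` {j..<DIM('v)} \<noteq> {}" using j by auto
    moreover have "\<theta> j \<noteq> {}" unfolding \<theta>_def by auto
    moreover have "aff_dim (\<theta> j) = int j" using affd j by simp
    ultimately show "fl ! j \<in> C_k C j" unfolding C_k_def flnth[OF j] mem_Collect_eq
      by (intro exI[of _ "hb ` {j..<DIM('v)}"] conjI) (use thInter[OF j] in simp_all)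
  next
    fix j assume "Suc j < DIM('v)"
    then show "fl ! j \<subseteq> fl ! Suc j" using flnth unfolding \<theta>_def by auto
  qed
  have fl0: "fl ! 0 = {v}" using flnth[of 0] th0 by simp
  have ptfl: "pt fl = v" unfolding pt_def fl0 by simp
  have mapnth: "map dir fl ! k = dir (\<theta> k)" if "k < DIM('v)" for k using that flnth unfolding fl_def by simp
  have adu: "adapted (map dir fl) u"
    unfolding adapted_def
  proof (intro allI impI conjI)
    fix k assume k: "k < DIM('v)"
    show "u k \<in> (if Suc k < DIM('v) then map dir fl ! Suc k else UNIV)"
      using au k mapnth dirth by auto
    show "u k \<notin> map dir fl ! k" using au k mapnth dirth by auto
  qed
  define u' where "u' = fst (sysf fl)"
  define w' where "w' = snd (sysf fl)"
  have bi': "biorth u' w'" unfolding u'_def w'_def by (rule sysf_biorth)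
  have ad': "adapted (map dir fl) u'" unfolding u'_def sysf_def using sysd_adapted[OF bi adu] .
  have P1: "a i \<bullet> u' k = 0" if "k < i" "i < DIM('v)" for i k
  proof -
    have k: "k < DIM('v)" "Suc k < DIM('v)" using that by auto
    have "u' k \<in> (if Suc k < DIM('v) then map dir fl ! Suc k else UNIV)" using ad' k(1) unfolding adapted_def by blast
    then have "u' k \<in> dir (\<theta> (Suc k))" using k(2) mapnth[OF k(2)] by simp
    then show ?thesis unfolding dirth using that by auto
  qed
  have P2: "a k \<bullet> u' k \<noteq> 0" if "k < DIM('v)" for k
  proof
    assume "a k \<bullet> u' k = 0"
    then have "u' k \<in> dir (\<theta> k)" unfolding dirth using P1 le_neq_implies_less by blast
    then show False using ad' that mapnth unfolding adapted_def by auto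
  qed
  have "\<forall>i. \<exists>g. i < DIM('v) \<longrightarrow> g \<in> \<Gamma> \<and> 0 < a i \<bullet> g"
  proof
    fix i show "\<exists>g. i < DIM('v) \<longrightarrow> g \<in> \<Gamma> \<and> 0 < a i \<bullet> g"
    proof (cases "i < DIM('v)")
      case True
      have op: "open {x. 0 < a i \<bullet> x}" by (intro open_Collect_less continuous_intros)
      have "a i \<in> {x. 0 < a i \<bullet> x}" using anz[OF True] by simp
      then have "{x. 0 < a i \<bullet> x} \<inter> closure \<Gamma> \<noteq> {}" using dense by blast
      then have "{x. 0 < a i \<bullet> x} \<inter> \<Gamma> \<noteq> {}" using open_Int_closure_eq_empty[OF op] by blast
      then show ?thesis by auto
    qed auto
  qed
  then obtain gg where gg: "\<And>i. i < DIM('v) \<Longrightarrow> gg i \<in> \<Gamma> \<and> 0 < a i \<bullet> gg i"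
    using choice by metis
  define c where "c i = a i \<bullet> gg i" for i
  have c0: "c i > 0" if "i < DIM('v)" for i using gg[OF that] unfolding c_def by simp
  have lowC: "{x. a i \<bullet> x = a i \<bullet> v} \<in> C" if "i < DIM('v)" for i
    using hbeq[OF that] hbF[OF that] F(1) by auto
  have upC: "{x. a i \<bullet> x = a i \<bullet> v + c i} \<in> C" if "i < DIM('v)" for i
  proof -
    have "(+) (gg i) ` hb i \<in> C" using ti hbF[OF that] F(1) gg[OF that] unfolding transinv_def by auto
    then show ?thesis using hbeq[OF that] hyp_translate unfolding c_def by metis
  qed
  define T where "T = {x. \<forall>i<DIM('v). a i \<bullet> v \<le> a i \<bullet> x \<and> a i \<bullet> x \<le> a i \<bullet> v + c i}"
  have tope: "C_tope C T" unfolding T_def by (rule tope_box[OF bi c0 lowC upC])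
  define AT where "AT = (\<lambda>i. (- a i, - (a i \<bullet> v))) ` {..<DIM('v)} \<union> (\<lambda>i. (a i, a i \<bullet> v + c i)) ` {..<DIM('v)}"
  have AT: "finite AT" "\<forall>(\<alpha>,\<beta>)\<in>AT. \<alpha> \<noteq> 0" unfolding AT_def using anz by auto
  define sstar where "sstar = {i. i < DIM('v) \<and> 0 < a i \<bullet> u' i}"
  have kmin_i: "kmin (- a i) u' = i" if "i < DIM('v)" for i
    unfolding kmin_def using P1 P2 that by (intro Least_equality) (auto simp: not_less[symmetric])
  have sg_up: "sgnv (a i) (a i \<bullet> v + c i) v u' s" if "i < DIM('v)" for i s
    unfolding sgnv_def using c0[OF that] by simp
  have sg_low: "sgnv (- a i) (- (a i \<bullet> v)) v u' s \<longleftrightarrow> (i \<in> s \<longleftrightarrow> i \<in> sstar)" if "i < DIM('v)" for i s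
    unfolding sgnv_def kmin_i[OF that] sstar_def sg_def using P2[OF that] that by auto
  have germT: "germ C (indicator (T \<inter> V' C)) v w' s = (if s = sstar then 1 else 0)"
    if s: "s \<subseteq> {..<DIM('v)}" for s
  proof (rule germ_eq[OF gC bi'])
    obtain d where d: "d > 0" "\<forall>x\<in>Sreg v w' s d. \<forall>(\<alpha>,\<beta>)\<in>AT. (\<alpha> \<bullet> x \<le> \<beta>) = sgnv \<alpha> \<beta> v u' s"
      using cell_sreg[OF bi' AT] by blast
    have "indicator (T \<inter> V' C) x = (if s = sstar then 1 else (0::int))" if x: "x \<in> Sreg v w' s d \<inter> V' C" for x
    proof -
      have x': "x \<in> Sreg v w' s d" using x by blast
      have lo: "(a i \<bullet> v \<le> a i \<bullet> x) = (i \<in> s \<longleftrightarrow> i \<in> sstar)" if "i < DIM('v)" for i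
      proof -
        have mem: "(- a i, - (a i \<bullet> v)) \<in> AT" unfolding AT_def using that by blast
        from bspec[OF bspec[OF d(2) x'] mem]
        have "((- a i) \<bullet> x \<le> - (a i \<bullet> v)) = sgnv (- a i) (- (a i \<bullet> v)) v u' s" by simp
        then show ?thesis using sg_low[OF that, of s] by simp
      qed
      have up: "a i \<bullet> x \<le> a i \<bullet> v + c i" if "i < DIM('v)" for i
      proof -
        have mem: "(a i, a i \<bullet> v + c i) \<in> AT" unfolding AT_def using that by blast
        from bspec[OF bspec[OF d(2) x'] mem]
        have "(a i \<bullet> x \<le> a i \<bullet> v + c i) = sgnv (a i) (a i \<bullet> v + c i) v u' s" by simp
        then show ?thesis using sg_up[OF that, of s] by simp
      qed
      have "x \<in> T \<longleftrightarrow> (\<forall>i<DIM('v). i \<in> s \<longleftrightarrow> i \<in> sstar)" unfolding T_def using lo up by auto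
      also have "\<dots> \<longleftrightarrow> s = sstar" using s unfolding sstar_def by auto
      finally show ?thesis using x by (simp add: indicator_def)
    qed
    then show "hasg C (indicator (T \<inter> V' C)) v w' s (if s = sstar then 1 else 0)"
      unfolding hasg_def using d(1) by blast
  qed
  have "delta C (indicator (T \<inter> V' C)) fl = (\<Sum>s\<in>Pow {..<DIM('v)}. if s = sstar then 1 else 0)"
    unfolding delta_def ptfl w'_def[symmetric] using germT by (intro sum.cong) auto
  also have "\<dots> = 1" using sstar_def by auto
  finally have "odd (delta C (indicator (T \<inter> V' C)) fl)" by simp
  then show ?thesis using flS fl0 tope by blast
qed

end

context setting
begin

lemma Z2_group: "group (Z2_sum \<Gamma> C)" unfolding Z2_sum_def by (rule sum_group) simp

lemma carrier_Z2: "carrier (Z2_sum \<Gamma> C) = {x \<in> (\<Pi>\<^sub>E J\<in>flag_orbits \<Gamma> C. {0..<2}). finite {J \<in> flag_orbits \<Gamma> C. x J \<noteq> 0}}"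
  unfolding Z2_sum_def by (subst carrier_sum_group) (auto simp: carrier_integer_mod_group)

lemma one_Z2: "\<one>\<^bsub>Z2_sum \<Gamma> C\<^esub> = (\<lambda>J\<in>flag_orbits \<Gamma> C. 0)"
  unfolding Z2_sum_def by simp

lemma mult_Z2: "x \<otimes>\<^bsub>Z2_sum \<Gamma> C\<^esub> y = (\<lambda>J\<in>flag_orbits \<Gamma> C. (x J + y J) mod 2)"
  unfolding Z2_sum_def by simp

lemma Xi_carrier:
  assumes "f \<in> CV C"
  shows "Xi f \<in> carrier (Z2_sum \<Gamma> C)"
proof -
  have "Xi f \<in> (\<Pi>\<^sub>E J\<in>flag_orbits \<Gamma> C. {0..<2})"
  proof -
    have vr: "valM G M D \<in> {0..<2}" for G M D unfolding valM_def by simp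
    have "\<forall>J \<in> flag_orbits \<Gamma> C. valM \<Gamma> (MJ J) (Dset J f) \<in> {0..<2}" using vr by (intro ballI)
    then show ?thesis unfolding Xi_def by (subst restrict_PiE_iff)
  qed
  then show ?thesis unfolding carrier_Z2 using Xi_support[OF assms] by simp
qed

lemma Xi_add:
  assumes "f \<in> CV C" "g \<in> CV C"
  shows "Xi (\<lambda>x. f x + g x) = Xi f \<otimes>\<^bsub>Z2_sum \<Gamma> C\<^esub> Xi g"
  unfolding mult_Z2
proof (rule ext)
  fix J
  show "Xi (\<lambda>x. f x + g x) J = (\<lambda>J\<in>flag_orbits \<Gamma> C. (Xi f J + Xi g J) mod 2) J"
  proof (cases "J \<in> flag_orbits \<Gamma> C")
    case True
    then show ?thesis unfolding Xi_def
      using Dset_add[OF assms, of J] valM_add[OF Dset_finite[OF True assms(1)] Dset_finite[OF True assms(2)]]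
      by simp
  next
    case False
    then show ?thesis unfolding Xi_def by simp
  qed
qed

lemma CV_group_group: "group (CV_group C)"
  using comm_group.axioms(2)[OF CV_group_comm] .

lemma Xi_hom: "Xi \<in> hom (CV_group C) (Z2_sum \<Gamma> C)"
  unfolding hom_def
proof (intro CollectI conjI ballI)
  show "Xi \<in> carrier (CV_group C) \<rightarrow> carrier (Z2_sum \<Gamma> C)"
    using Xi_carrier unfolding CV_group_def by auto
  fix f g assume "f \<in> carrier (CV_group C)" "g \<in> carrier (CV_group C)"
  then show "Xi (f \<otimes>\<^bsub>CV_group C\<^esub> g) = Xi f \<otimes>\<^bsub>Z2_sum \<Gamma> C\<^esub> Xi g"
    using Xi_add unfolding CV_group_def by simp
qed

lemma Xi_group_hom: "group_hom (CV_group C) (Z2_sum \<Gamma> C) Xi"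
  unfolding group_hom_def group_hom_axioms_def using CV_group_group Z2_group Xi_hom by blast

lemma gens_CV: "{(\<lambda>x. f x - translate_fun g f x) | f g. f \<in> CV C \<and> g \<in> \<Gamma>} \<subseteq> carrier (CV_group C)"
proof
  fix e assume "e \<in> {(\<lambda>x. f x - translate_fun g f x) | f g. f \<in> CV C \<and> g \<in> \<Gamma>}"
  then obtain f g where fg: "e = (\<lambda>x. f x - translate_fun g f x)" "f \<in> CV C" "g \<in> \<Gamma>" by blast
  have "e \<in> CV C" unfolding fg(1) by (rule CV.diff[OF fg(2) CV_translate[OF ti fg(3,2)]])
  then show "e \<in> carrier (CV_group C)" unfolding CV_group_def by simp
qed

lemma coinv_subgroup_sub: "subgroup (coinv_subgroup \<Gamma> C) (CV_group C)"
  unfolding coinv_subgroup_def by (rule group.generate_is_subgroup[OF CV_group_group gens_CV])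

lemma coinv_kernel: "coinv_subgroup \<Gamma> C \<subseteq> kernel (CV_group C) (Z2_sum \<Gamma> C) Xi"
  unfolding coinv_subgroup_def
proof (rule group.generate_subgroup_incl[OF CV_group_group])
  show "subgroup (kernel (CV_group C) (Z2_sum \<Gamma> C) Xi) (CV_group C)"
    by (rule group_hom.subgroup_kernel[OF Xi_group_hom])
  show "{(\<lambda>x. f x - translate_fun g f x) | f g. f \<in> CV C \<and> g \<in> \<Gamma>} \<subseteq> kernel (CV_group C) (Z2_sum \<Gamma> C) Xi"
  proof
    fix e assume "e \<in> {(\<lambda>x. f x - translate_fun g f x) | f g. f \<in> CV C \<and> g \<in> \<Gamma>}"
    then obtain f g where fg: "e = (\<lambda>x. f x - translate_fun g f x)" "f \<in> CV C" "g \<in> \<Gamma>" by blast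
    have "Xi e = \<one>\<^bsub>Z2_sum \<Gamma> C\<^esub>"
      unfolding one_Z2 fg(1) Xi_def using Xi_generator[OF _ fg(2,3)] by (intro restrict_ext) simp
    moreover have "e \<in> carrier (CV_group C)" using gens_CV fg by blast
    ultimately show "e \<in> kernel (CV_group C) (Z2_sum \<Gamma> C) Xi" unfolding kernel_def by simp
  qed
qed


lemma xi_coset:
  assumes "f \<in> CV C"
  shows "Xi (SOME f'. f' \<in> coinv_subgroup \<Gamma> C #>\<^bsub>CV_group C\<^esub> f) = Xi f"
proof -
  let ?H = "coinv_subgroup \<Gamma> C"
  have fc: "f \<in> carrier (CV_group C)" using assms unfolding CV_group_def by simp
  have "f \<in> ?H #>\<^bsub>CV_group C\<^esub> f"
    using group.rcos_self[OF CV_group_group fc coinv_subgroup_sub] .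
  then have "(SOME f'. f' \<in> ?H #>\<^bsub>CV_group C\<^esub> f) \<in> ?H #>\<^bsub>CV_group C\<^esub> f"
    using someI[of "\<lambda>f'. f' \<in> ?H #>\<^bsub>CV_group C\<^esub> f" f] by blast
  then obtain h where h: "h \<in> ?H" "(SOME f'. f' \<in> ?H #>\<^bsub>CV_group C\<^esub> f) = h \<otimes>\<^bsub>CV_group C\<^esub> f"
    unfolding r_coset_def by auto
  have hk: "h \<in> kernel (CV_group C) (Z2_sum \<Gamma> C) Xi" using h(1) coinv_kernel by blast
  then have hc: "h \<in> carrier (CV_group C)" and h1: "Xi h = \<one>\<^bsub>Z2_sum \<Gamma> C\<^esub>" unfolding kernel_def by auto
  have "Xi (SOME f'. f' \<in> ?H #>\<^bsub>CV_group C\<^esub> f) = Xi (h \<otimes>\<^bsub>CV_group C\<^esub> f)" unfolding h(2) ..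
  also have "\<dots> = Xi h \<otimes>\<^bsub>Z2_sum \<Gamma> C\<^esub> Xi f" using Xi_hom hc fc unfolding hom_def by blast
  also have "\<dots> = Xi f" unfolding h1 using monoid.l_one[OF group.is_monoid[OF Z2_group] Xi_carrier[OF assms]] .
  finally show ?thesis .
qed

lemma xi_hom: "(\<lambda>XX. Xi (SOME f. f \<in> XX)) \<in> hom (H0 \<Gamma> C) (Z2_sum \<Gamma> C)"
  unfolding hom_def
proof (intro CollectI conjI ballI)
  have carr: "carrier (H0 \<Gamma> C) = (\<lambda>f. coinv_subgroup \<Gamma> C #>\<^bsub>CV_group C\<^esub> f) ` CV C"
    unfolding H0_def carrier_FactGroup by (simp add: CV_group_def)
  show "(\<lambda>XX. Xi (SOME f. f \<in> XX)) \<in> carrier (H0 \<Gamma> C) \<rightarrow> carrier (Z2_sum \<Gamma> C)"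
    unfolding carr using xi_coset Xi_carrier by auto
  fix XX YY assume "XX \<in> carrier (H0 \<Gamma> C)" "YY \<in> carrier (H0 \<Gamma> C)"
  then obtain f g where fg: "f \<in> CV C" "g \<in> CV C" "XX = coinv_subgroup \<Gamma> C #>\<^bsub>CV_group C\<^esub> f"
      "YY = coinv_subgroup \<Gamma> C #>\<^bsub>CV_group C\<^esub> g" unfolding carr by auto
  have nrm: "coinv_subgroup \<Gamma> C \<lhd> CV_group C"
    using comm_group.subgroup_imp_normal[OF CV_group_comm coinv_subgroup_sub] .
  have fc: "f \<in> carrier (CV_group C)" "g \<in> carrier (CV_group C)" using fg unfolding CV_group_def by auto
  have "XX \<otimes>\<^bsub>H0 \<Gamma> C\<^esub> YY = coinv_subgroup \<Gamma> C #>\<^bsub>CV_group C\<^esub> (f \<otimes>\<^bsub>CV_group C\<^esub> g)"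
    unfolding H0_def mult_FactGroup fg(3,4) using normal.rcos_sum[OF nrm fc] .
  moreover have "f \<otimes>\<^bsub>CV_group C\<^esub> g \<in> CV C" using fg CV_add unfolding CV_group_def by simp
  ultimately have "Xi (SOME f. f \<in> XX \<otimes>\<^bsub>H0 \<Gamma> C\<^esub> YY) = Xi (f \<otimes>\<^bsub>CV_group C\<^esub> g)" using xi_coset by simp
  also have "\<dots> = Xi f \<otimes>\<^bsub>Z2_sum \<Gamma> C\<^esub> Xi g" using Xi_hom fc unfolding hom_def by blast
  finally show "Xi (SOME f. f \<in> XX \<otimes>\<^bsub>H0 \<Gamma> C\<^esub> YY) = Xi (SOME f. f \<in> XX) \<otimes>\<^bsub>Z2_sum \<Gamma> C\<^esub> Xi (SOME f. f \<in> YY)" using xi_coset fg by simp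
qed

lemma main_point:
  assumes vP: "v \<in> points_P C" and dense: "closure \<Gamma> = UNIV"
  shows "\<exists>fl e. fl \<in> singular_flags C \<and> fl ! 0 = {v} \<and> e \<in> carrier (H0 \<Gamma> C) \<and> Xi (SOME f. f \<in> e) (flag_orbit \<Gamma> fl) = 1"
proof -
  obtain fl T where flT: "fl \<in> singular_flags C" "fl ! 0 = {v}" "C_tope C T"
      "odd (delta C (indicator (T \<inter> V' C)) fl)"
    using point_flag[OF vP dense] by blast
  define J where "J = flag_orbit \<Gamma> fl"
  have J: "J \<in> flag_orbits \<Gamma> C" unfolding J_def flag_orbits_def using flT(1) by blast
  have "0 \<in> \<Gamma>" unfolding GB int_span_def by (auto intro!: exI[of _ "\<lambda>_. 0"])
  then have "fl \<in> J" unfolding J_def flag_orbit_def mem_Collect_eq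
    by (intro exI[of _ 0] conjI) (simp_all add: translate_flag_0)
  then have "fl \<in> flag_orbit \<Gamma> (rep J)" using rep_props(2)[OF J] by simp
  then obtain g0 where g0: "g0 \<in> \<Gamma>" "fl = translate_flag g0 (rep J)" unfolding flag_orbit_def by blast
  define fT where "fT = (indicator (T \<inter> V' C) :: 'v \<Rightarrow> int)"
  have fT: "fT \<in> CV C" unfolding fT_def by (rule CV.gen[OF flT(3)])
  have "g0 \<in> Dset J fT" unfolding Dset_def fT_def using g0 flT(4) by simp
  then have ne: "Dset J fT \<noteq> {}" by blast
  have DM: "Dset J fT \<in> MJ J" unfolding MJ_def using fT by blast
  obtain D' where D': "D' \<in> MJ J" "valM \<Gamma> (MJ J) D' = 1"
    using valM_one[OF fB iB _ DM ne] MJ_props[OF J] unfolding GB by blast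
  then obtain f' where f': "f' \<in> CV C" "D' = Dset J f'" unfolding MJ_def by blast
  define e where "e = coinv_subgroup \<Gamma> C #>\<^bsub>CV_group C\<^esub> f'"
  have "e \<in> carrier (H0 \<Gamma> C)" unfolding e_def H0_def carrier_FactGroup using f'(1) by (simp add: CV_group_def)
  moreover have "Xi (SOME f. f \<in> e) J = 1"
  proof -
    have "Xi (SOME f. f \<in> e) = Xi f'" unfolding e_def by (rule xi_coset[OF f'(1)])
    then show ?thesis unfolding Xi_def using J D' f' by (metis restrict_apply')
  qed
  ultimately show ?thesis using flT(1,2) unfolding J_def by blast
qed

end

lemma int_span_neg: "x \<in> int_span B \<Longrightarrow> - x \<in> int_span B"
proof -
  assume "x \<in> int_span B"
  then obtain c where "x = (\<Sum>b\<in>B. of_int (c b) *\<^sub>R b)" unfolding int_span_def by auto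
  then have "- x = (\<Sum>b\<in>B. of_int (- c b) *\<^sub>R b)" by (simp add: sum_negf)
  then show ?thesis unfolding int_span_def mem_Collect_eq by (intro exI[of _ "\<lambda>b. - c b"]) simp
qed

theorem mainTheorem5:
  fixes \<Gamma> :: "'v::euclidean_space set" and \<C> :: "'v set set"
  assumes gamma_sub: "subgroup \<Gamma> \<lparr>carrier = UNIV, monoid.mult = (+), one = (0::'v)\<rparr>"
    and gamma_free: "fg_free_subgroup \<Gamma>"
    and gamma_dense: "closure \<Gamma> = UNIV"
    and C_hyp: "\<forall>H\<in>\<C>. affine_hyperplane H"
    and C_countable: "countable \<C>"
    and C_inv: "\<forall>H\<in>\<C>. \<forall>g\<in>\<Gamma>. (+) g ` H \<in> \<C>"
    and C_orbits: "\<exists>S. finite S \<and> S \<subseteq> \<C> \<and> \<C> = {(+) g ` H | g H. g \<in> \<Gamma> \<and> H \<in> S}"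
    and C_span: "span (normals \<C>) = UNIV"
  shows "\<exists>\<xi>. \<xi> \<in> hom (H0 \<Gamma> \<C>) (Z2_sum \<Gamma> \<C>) \<and>
           (\<forall>v\<in>points_P \<C>. \<exists>fl e. fl \<in> singular_flags \<C> \<and> fl ! 0 = {v} \<and>
               e \<in> carrier (H0 \<Gamma> \<C>) \<and> \<xi> e (flag_orbit \<Gamma> fl) = 1)"
proof -
  obtain B where B: "finite B" "int_independent B" "\<Gamma> = int_span B"
    using gamma_free unfolding fg_free_subgroup_def by blast
  have negG: "\<forall>g\<in>\<Gamma>. - g \<in> \<Gamma>" using int_span_neg B(3) by blast
  have gC: "goodC \<C>" unfolding goodC_def using C_hyp C_countable by blast
  have ti: "transinv \<Gamma> \<C>" unfolding transinv_def using C_inv negG by blast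
  interpret S: setting \<Gamma> \<C> B
    by (rule setting.intro[OF gC ti B(3) B(1) B(2) C_orbits])
  have "(\<lambda>XX. S.Xi (SOME f. f \<in> XX)) \<in> hom (H0 \<Gamma> \<C>) (Z2_sum \<Gamma> \<C>)" by (rule S.xi_hom)
  moreover have "\<forall>v\<in>points_P \<C>. \<exists>fl e. fl \<in> singular_flags \<C> \<and> fl ! 0 = {v} \<and>
               e \<in> carrier (H0 \<Gamma> \<C>) \<and> (\<lambda>XX. S.Xi (SOME f. f \<in> XX)) e (flag_orbit \<Gamma> fl) = 1"
    using S.main_point[OF _ gamma_dense] by simp
  ultimately show ?thesis by blast
qed

end
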